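(* Let $(X,\mathcal{F},\mu)$ be a finite positive measure space and let $\{\psi_{j,k}(x): j,k=1,2,\dots\}$ be an orthonormal system of real-valued functions in $L^2(X,\mathcal{F},\mu)$. Let $\{c_{j,k}: j,k=1,2,\dots\}$ be real numbers such that $$\sum_{j=1}^{\infty}\sum_{k=1}^{\infty}c_{j,k}^2\,[\log\log(j+3)]^2\,[\log\log(k+3)]^2<\infty .$$ Let $s_{m,n}(x)=\sum_{j=1}^{m}\sum_{k=1}^{n}c_{j,k}\psi_{j,k}(x)$ for $m,n=1,2,\dots$, and let $g\in L^2(X,\mathcal{F},\mu)$ be the $L^2$-sum of the series $\sum_{j,k}c_{j,k}\psi_{j,k}$, i.e. $\lim_{m,n\to\infty}\int_X|s_{m,n}(x)-g(x)|^2\,d\mu(x)=0$. Then the series is strongly Cesàro $|C,1,1|$ summable almost everywhere to $g$, that is, $$\frac{1}{MN}\sum_{m=1}^{M}\sum_{n=1}^{N}|s_{m,n}(x)-g(x)|^2\to 0\quad\text{for }\mu\text{-almost every }x\in X,\ \text{as }M,N\to\infty.$$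
   Context: Here $M,N\to\infty$ means that both $M$ and $N$ tend to infinity (convergence in Pringsheim's sense, i.e. as $\min(M,N)\to\infty$). Logarithms are to base 2. The orthonormal system is what the paper calls a wavelet system; only orthonormality is used. *)

theory Defs
  imports "HOL-Analysis.Analysis"
begin

definition rect_partial_sum ::
  "(nat \<Rightarrow> nat \<Rightarrow> real) \<Rightarrow> (nat \<Rightarrow> nat \<Rightarrow> 'a \<Rightarrow> real) \<Rightarrow> nat \<Rightarrow> nat \<Rightarrow> 'a \<Rightarrow> real" where
  "rect_partial_sum c \<psi> m n x = (\<Sum>j=1..m. \<Sum>k=1..n. c j k * \<psi> j k x)"

definition orthonormal_system2 :: "'a measure \<Rightarrow> (nat \<Rightarrow> nat \<Rightarrow> 'a \<Rightarrow> real) \<Rightarrow> bool" where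
  "orthonormal_system2 M \<psi> \<longleftrightarrow>
     (\<forall>j\<ge>1. \<forall>k\<ge>1. \<psi> j k \<in> borel_measurable M \<and> integrable M (\<lambda>x. (\<psi> j k x)\<^sup>2)) \<and>
     (\<forall>j\<ge>1. \<forall>k\<ge>1. \<forall>j'\<ge>1. \<forall>k'\<ge>1.
        (\<integral>x. \<psi> j k x * \<psi> j' k' x \<partial>M) = (if j = j' \<and> k = k' then 1 else 0))"

end

theory Submission
  imports Defs
begin


locale dbl =
  fixes M :: "'a measure" and \<psi> :: "nat \<Rightarrow> nat \<Rightarrow> 'a \<Rightarrow> real" and c :: "nat \<Rightarrow> nat \<Rightarrow> real"
  assumes fin: "finite_measure M" and ons: "orthonormal_system2 M \<psi>"
begin

definition Sm :: "nat set \<Rightarrow> nat set \<Rightarrow> 'a \<Rightarrow> real" where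
  "Sm A B x = (\<Sum>j\<in>A. \<Sum>k\<in>B. c j k * \<psi> j k x)"

definition gam :: "nat set \<Rightarrow> nat set \<Rightarrow> real" where
  "gam A B = (\<Sum>j\<in>A. \<Sum>k\<in>B. (c j k)\<^sup>2)"

lemma psi_meas: "j \<ge> 1 \<Longrightarrow> k \<ge> 1 \<Longrightarrow> \<psi> j k \<in> borel_measurable M"
  using ons unfolding orthonormal_system2_def by blast

lemma psi_sq_int: "j \<ge> 1 \<Longrightarrow> k \<ge> 1 \<Longrightarrow> integrable M (\<lambda>x. (\<psi> j k x)\<^sup>2)"
  using ons unfolding orthonormal_system2_def by blast

lemma psi_orth: "j \<ge> 1 \<Longrightarrow> k \<ge> 1 \<Longrightarrow> j' \<ge> 1 \<Longrightarrow> k' \<ge> 1 \<Longrightarrow>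
   (\<integral>x. \<psi> j k x * \<psi> j' k' x \<partial>M) = (if j = j' \<and> k = k' then 1 else 0)"
  using ons unfolding orthonormal_system2_def by blast

lemma psi_prod_int:
  assumes "j \<ge> 1" "k \<ge> 1" "j' \<ge> 1" "k' \<ge> 1"
  shows "integrable M (\<lambda>x. \<psi> j k x * \<psi> j' k' x)"
proof (rule Bochner_Integration.integrable_bound[where f="\<lambda>x. (\<psi> j k x)\<^sup>2 + (\<psi> j' k' x)\<^sup>2"])
  show "integrable M (\<lambda>x. (\<psi> j k x)\<^sup>2 + (\<psi> j' k' x)\<^sup>2)"
    using psi_sq_int assms by auto
  show "(\<lambda>x. \<psi> j k x * \<psi> j' k' x) \<in> borel_measurable M"
    using psi_meas assms by auto
  show "AE x in M. norm (\<psi> j k x * \<psi> j' k' x) \<le> norm ((\<psi> j k x)\<^sup>2 + (\<psi> j' k' x)\<^sup>2)"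
  proof (intro AE_I2)
    fix x
    have "0 \<le> (\<bar>\<psi> j k x\<bar> - \<bar>\<psi> j' k' x\<bar>)\<^sup>2" by simp
    then have "2 * \<bar>\<psi> j k x * \<psi> j' k' x\<bar> \<le> (\<psi> j k x)\<^sup>2 + (\<psi> j' k' x)\<^sup>2"
      by (simp add: power2_eq_square abs_mult algebra_simps)
    then show "norm (\<psi> j k x * \<psi> j' k' x) \<le> norm ((\<psi> j k x)\<^sup>2 + (\<psi> j' k' x)\<^sup>2)"
      by simp
  qed
qed

lemma pos_sub: "A \<subseteq> {0<..} \<Longrightarrow> j \<in> A \<Longrightarrow> j \<ge> (1::nat)"
  by auto

lemma Sm_meas: "A \<subseteq> {0<..} \<Longrightarrow> B \<subseteq> {0<..} \<Longrightarrow> Sm A B \<in> borel_measurable M"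
  unfolding Sm_def[abs_def] by (auto intro!: borel_measurable_sum borel_measurable_times psi_meas)

lemma sum2_delta:
  assumes "finite A" "finite B" "x \<in> A" "y \<in> B"
  shows "(\<Sum>j\<in>A. \<Sum>k\<in>B. if x = j \<and> y = k then f j k else 0) = (f x y :: real)"
proof -
  have "(\<Sum>j\<in>A. \<Sum>k\<in>B. if x = j \<and> y = k then f j k else 0) =
        (\<Sum>j\<in>A. if x = j then (\<Sum>k\<in>B. if y = k then f j k else 0) else 0)"
    by (intro sum.cong) auto
  then show ?thesis using assms by simp
qed

lemma Sm_sq_int:
  assumes "A \<subseteq> {0<..}" "B \<subseteq> {0<..}" "finite A" "finite B"
  shows "integrable M (\<lambda>x. (Sm A B x)\<^sup>2)" and "(\<integral>x. (Sm A B x)\<^sup>2 \<partial>M) = gam A B"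
proof -
  have eq: "(Sm A B x)\<^sup>2 = (\<Sum>j\<in>A. \<Sum>k\<in>B. \<Sum>j'\<in>A. \<Sum>k'\<in>B. c j k * c j' k' * (\<psi> j k x * \<psi> j' k' x))" for x
    unfolding Sm_def power2_eq_square sum_distrib_right sum_distrib_left
    by (simp add: mult_ac)
  have ints: "integrable M (\<lambda>x. c j k * c j' k' * (\<psi> j k x * \<psi> j' k' x))"
    if "j \<in> A" "k \<in> B" "j' \<in> A" "k' \<in> B" for j k j' k'
    using that assms by (intro integrable_mult_right psi_prod_int) auto
  show "integrable M (\<lambda>x. (Sm A B x)\<^sup>2)"
    unfolding eq by (auto intro!: Bochner_Integration.integrable_sum ints)
  have "(\<integral>x. (Sm A B x)\<^sup>2 \<partial>M) = (\<Sum>j\<in>A. \<Sum>k\<in>B. \<Sum>j'\<in>A. \<Sum>k'\<in>B. c j k * c j' k' * (if j = j' \<and> k = k' then 1 else 0))"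
    unfolding eq
    apply (subst Bochner_Integration.integral_sum, fastforce intro!: Bochner_Integration.integrable_sum ints)
    apply (intro sum.cong refl)
    apply (subst Bochner_Integration.integral_sum, fastforce intro!: Bochner_Integration.integrable_sum ints)
    apply (intro sum.cong refl)
    apply (subst Bochner_Integration.integral_sum, fastforce intro!: Bochner_Integration.integrable_sum ints)
    apply (intro sum.cong refl)
    apply (subst Bochner_Integration.integral_sum, fastforce intro!: Bochner_Integration.integrable_sum ints)
    apply (intro sum.cong refl)
    apply (subst integral_mult_right_zero)
    apply (subst psi_orth)
    using assms by auto
  also have "\<dots> = gam A B"
    unfolding gam_def power2_eq_square
    apply (intro sum.cong refl)
    using assms by (simp add: if_distrib sum2_delta cong: if_cong)
  finally show "(\<integral>x. (Sm A B x)\<^sup>2 \<partial>M) = gam A B" .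
qed

lemma gam_nonneg: "gam A B \<ge> 0"
  unfolding gam_def by (intro sum_nonneg) auto

lemma Sm_nn:
  assumes "A \<subseteq> {0<..}" "B \<subseteq> {0<..}" "finite A" "finite B"
  shows "(\<integral>\<^sup>+x. ennreal ((Sm A B x)\<^sup>2) \<partial>M) = ennreal (gam A B)"
  using Sm_sq_int[OF assms] by (subst nn_integral_eq_integral) auto

end


lemma iv_split:
  fixes h :: "nat \<Rightarrow> 'b::comm_monoid_add"
  assumes "a \<le> b" "b \<le> c"
  shows "(\<Sum>j\<in>{a<..c}. h j) = (\<Sum>j\<in>{a<..b}. h j) + (\<Sum>j\<in>{b<..c}. h j)"
proof -
  have "{a<..c} = {a<..b} \<union> {b<..c}" using assms by auto
  then show ?thesis by (simp add: sum.union_disjoint ivl_disj_int)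
qed

lemma iv_pre:
  fixes h :: "nat \<Rightarrow> 'b::ab_group_add"
  assumes "a \<le> b"
  shows "(\<Sum>j\<in>{a<..b}. h j) = (\<Sum>j\<in>{0<..b}. h j) - (\<Sum>j\<in>{0<..a}. h j)"
  using iv_split[of 0 a b h] assms by simp

lemma grid_sum:
  fixes h :: "nat \<Rightarrow> 'b::ab_group_add"
  assumes "mono e"
  shows "(\<Sum>t<N. \<Sum>j\<in>{e t<..e (Suc t)}. h j) = (\<Sum>j\<in>{e 0<..e N}. h j)"
proof -
  have "(\<Sum>t<N. \<Sum>j\<in>{e t<..e (Suc t)}. h j) =
        (\<Sum>t<N. (\<Sum>j\<in>{0<..e (Suc t)}. h j) - (\<Sum>j\<in>{0<..e t}. h j))"
    using assms by (intro sum.cong refl iv_pre) (auto simp: mono_def)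
  also have "\<dots> = (\<Sum>j\<in>{0<..e N}. h j) - (\<Sum>j\<in>{0<..e 0}. h j)"
    by (rule sum_lessThan_telescope)
  also have "\<dots> = (\<Sum>j\<in>{e 0<..e N}. h j)"
    using assms by (intro iv_pre[symmetric]) (auto simp: mono_def)
  finally show ?thesis .
qed

definition aa :: "nat \<Rightarrow> nat \<Rightarrow> nat" where
  "aa r l = (r div 2^l) * 2^l"

lemma aa_mono: "aa r (Suc l) \<le> aa r l"
proof -
  have "r div 2^(Suc l) = (r div 2^l) div 2"
    by (simp only: power_Suc2 div_mult2_eq)
  then have "aa r (Suc l) = ((r div 2^l) div 2 * 2) * 2^l"
    unfolding aa_def by simp
  also have "\<dots> \<le> (r div 2^l) * 2^l" by simp
  finally show ?thesis unfolding aa_def .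
qed

lemma aa_cases:
  "aa r l = aa r (Suc l) \<or> aa r l = aa r (Suc l) + 2^l"
proof -
  define q where "q = r div 2^l"
  have 1: "aa r (Suc l) = (q div 2 * 2) * 2^l"
    unfolding aa_def q_def by (simp only: power_Suc2 div_mult2_eq mult.assoc)
  have 2: "aa r l = q * 2^l" unfolding aa_def q_def by simp
  have q: "q = q div 2 * 2 + q mod 2" by simp
  show ?thesis
  proof (cases "q mod 2 = 0")
    case True
    then show ?thesis using 1 2 q by simp
  next
    case False
    then have "q mod 2 = 1" by simp
    then have "q * 2^l = (q div 2 * 2) * 2^l + 2^l" using q
      by (metis add.commute distrib_right mult_1)
    then show ?thesis using 1 2 by simp
  qed
qed

lemma aa_dvd: "aa r (Suc l) = (aa r (Suc l) div 2^l) * 2^l"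
  unfolding aa_def by (simp add: mult.assoc[symmetric])

lemma aa_le: "aa r l \<le> r"
  unfolding aa_def by (metis div_mult_mod_eq le_add1)

lemma aa_0: "aa r 0 = r" unfolding aa_def by simp

lemma aa_top: "r < 2^L \<Longrightarrow> aa r L = 0" unfolding aa_def by simp

lemma RM_decomp:
  fixes h :: "nat \<Rightarrow> real"
  assumes "mono e" "r < 2^(Suc L)"
  shows "(\<Sum>j\<in>{e 0<..e r}. h j) = (\<Sum>l\<le>L. \<Sum>j\<in>{e (aa r (Suc l))<..e (aa r l)}. h j)"
proof -
  let ?P = "\<lambda>y. \<Sum>j\<in>{0<..y}. h j"
  have "(\<Sum>l\<le>L. \<Sum>j\<in>{e (aa r (Suc l))<..e (aa r l)}. h j) =
        (\<Sum>l\<le>L. ?P (e (aa r l)) - ?P (e (aa r (Suc l))))"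
    using assms aa_mono by (intro sum.cong refl iv_pre) (auto simp: mono_def)
  also have "\<dots> = ?P (e (aa r 0)) - ?P (e (aa r (Suc L)))"
    by (rule sum_telescope)
  also have "\<dots> = ?P (e r) - ?P (e 0)"
    using assms by (simp add: aa_0 aa_top)
  also have "\<dots> = (\<Sum>j\<in>{e 0<..e r}. h j)"
    using assms by (intro iv_pre[symmetric]) (auto simp: mono_def)
  finally show ?thesis by simp
qed

definition RMaj :: "(nat \<Rightarrow> nat) \<Rightarrow> nat \<Rightarrow> (nat \<Rightarrow> real) \<Rightarrow> real" where
  "RMaj e L h = (\<Sum>l\<le>L. \<Sum>u<2^(L-l). (\<Sum>j\<in>{e (u*2^l)<..e ((Suc u)*2^l)}. h j)\<^sup>2)"

lemma RMaj_nonneg: "RMaj e L h \<ge> 0"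
  unfolding RMaj_def by (intro sum_nonneg) auto

lemma piece_le:
  fixes h :: "nat \<Rightarrow> real"
  assumes "r \<le> 2^L" "l \<le> L"
  shows "(\<Sum>j\<in>{e (aa r (Suc l))<..e (aa r l)}. h j)\<^sup>2
       \<le> (\<Sum>u<2^(L-l). (\<Sum>j\<in>{e (u*2^l)<..e ((Suc u)*2^l)}. h j)\<^sup>2)"
proof (cases "aa r l = aa r (Suc l)")
  case True
  then show ?thesis by (simp add: sum_nonneg)
next
  case False
  define u where "u = aa r (Suc l) div 2^l"
  have 1: "aa r (Suc l) = u * 2^l" using aa_dvd u_def by simp
  have 2: "aa r l = Suc u * 2^l" using aa_cases[of r l] False 1 by auto
  have "Suc u * 2^l \<le> 2^L" using 2 aa_le[of r l] assms by simp
  also have "(2::nat)^L = 2^(L-l) * 2^l" using assms by (simp flip: power_add)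
  finally have "Suc u * 2^l \<le> 2^(L-l) * 2^l" .
  then have "Suc u \<le> 2^(L-l)" using mult_le_cancel2[of "Suc u" "2^l" "2^(L-l)"] by (simp del: mult_Suc)
  then have "u < 2^(L-l)" by simp
  then have "(\<Sum>j\<in>{e (u*2^l)<..e ((Suc u)*2^l)}. h j)\<^sup>2
       \<le> (\<Sum>u<2^(L-l). (\<Sum>j\<in>{e (u*2^l)<..e ((Suc u)*2^l)}. h j)\<^sup>2)"
    by (intro member_le_sum) auto
  then show ?thesis using 1 2 by simp
qed

lemma RM_bound:
  fixes h :: "nat \<Rightarrow> real"
  assumes "mono e" "r \<le> 2^L"
  shows "(\<Sum>j\<in>{e 0<..e r}. h j)\<^sup>2 \<le> (L+1) * RMaj e L h"
proof -
  have r: "r < 2^(Suc L)" using assms(2) by (simp add: order_le_less_trans)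
  have "(\<Sum>j\<in>{e 0<..e r}. h j)\<^sup>2 = (\<Sum>l\<le>L. \<Sum>j\<in>{e (aa r (Suc l))<..e (aa r l)}. h j)\<^sup>2"
    using RM_decomp[OF assms(1) r] by simp
  also have "\<dots> \<le> (\<Sum>l\<le>L. (\<Sum>j\<in>{e (aa r (Suc l))<..e (aa r l)}. h j)\<^sup>2) * card {..L}"
    by (rule sum_squared_le_sum_of_squares)
  also have "\<dots> = (\<Sum>l\<le>L. (\<Sum>j\<in>{e (aa r (Suc l))<..e (aa r l)}. h j)\<^sup>2) * (L+1)"
    by simp
  also have "\<dots> \<le> RMaj e L h * (L+1)"
    by (intro mult_right_mono, unfold RMaj_def, intro sum_mono piece_le) (use assms in auto)
  finally show ?thesis by (simp add: mult.commute add.commute)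
qed

lemma RM_sum:
  fixes h :: "nat \<Rightarrow> 'b::ab_group_add"
  assumes "mono e" "l \<le> L"
  shows "(\<Sum>u<2^(L-l). \<Sum>j\<in>{e (u*2^l)<..e ((Suc u)*2^l)}. h j) = (\<Sum>j\<in>{e 0<..e (2^L)}. h j)"
proof -
  have m: "mono (\<lambda>u. e (u*2^l))" using assms(1) by (auto simp: mono_def)
  have "(2::nat)^(L-l) * 2^l = 2^L" using assms by (simp flip: power_add)
  then show ?thesis using grid_sum[OF m, of h "2^(L-l)"] by simp
qed


context dbl begin

definition col :: "nat set \<Rightarrow> 'a \<Rightarrow> nat \<Rightarrow> real" where
  "col A x k = (\<Sum>j\<in>A. c j k * \<psi> j k x)"

lemma Sm_col: "Sm A B x = (\<Sum>k\<in>B. col A x k)"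
  unfolding Sm_def col_def by (rule sum.swap)

lemma gam_col: "gam A B = (\<Sum>k\<in>B. \<Sum>j\<in>A. (c j k)\<^sup>2)"
  unfolding gam_def by (rule sum.swap)

lemma Sm_split2:
  assumes "a \<le> b" "b \<le> d"
  shows "Sm A {a<..d} x = Sm A {a<..b} x + Sm A {b<..d} x"
  unfolding Sm_col using iv_split[OF assms] .

lemma gam_split2:
  assumes "a \<le> b" "b \<le> d"
  shows "gam A {a<..d} = gam A {a<..b} + gam A {b<..d}"
  unfolding gam_col using iv_split[OF assms] .

lemma gam_mono2:
  assumes "B \<subseteq> B'" "finite B'"
  shows "gam A B \<le> gam A B'"
  unfolding gam_col using assms by (intro sum_mono2) (auto intro!: sum_nonneg)

lemma Sm_int:
  assumes "A \<subseteq> {0<..}" "finite A" "finite B" "B \<subseteq> {0<..}"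
  shows "integrable M (\<lambda>x. (Sm A B x)\<^sup>2)" "(\<integral>x. (Sm A B x)\<^sup>2 \<partial>M) = gam A B"
  using Sm_sq_int[of A B] assms by auto

lemma ioc_pos[simp]: "{a<..b::nat} \<subseteq> {0<..}" by auto

lemma Sm_int_s[simp]:
  "A \<subseteq> {0<..} \<Longrightarrow> finite A \<Longrightarrow> integrable M (\<lambda>x. (Sm A {a<..b} x)\<^sup>2)"
  "A \<subseteq> {0<..} \<Longrightarrow> finite A \<Longrightarrow> (\<integral>x. (Sm A {a<..b} x)\<^sup>2 \<partial>M) = gam A {a<..b}"
  using Sm_int[of A "{a<..b}"] by auto

lemma RMaj_col: "RMaj e L (col A x) =
   (\<Sum>l\<le>L. \<Sum>u<2^(L-l). (Sm A {e (u*2^l)<..e ((Suc u)*2^l)} x)\<^sup>2)"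
  unfolding RMaj_def Sm_col ..

lemma RMaj_col_int:
  fixes L :: nat and e :: "nat \<Rightarrow> nat"
  assumes "A \<subseteq> {0<..}" "finite A" "mono e"
  shows "integrable M (\<lambda>x. RMaj e L (col A x))"
    "(\<integral>x. RMaj e L (col A x) \<partial>M) = (L+1) * gam A {e 0<..e (2^L)}"
proof -
  show "integrable M (\<lambda>x. RMaj e L (col A x))"
    unfolding RMaj_col using assms by (auto intro!: Bochner_Integration.integrable_sum Sm_int)
  have "(\<integral>x. RMaj e L (col A x) \<partial>M) = (\<Sum>l\<le>L. \<Sum>u<2^(L-l). gam A {e (u*2^l)<..e ((Suc u)*2^l)})"
    unfolding RMaj_col using assms
    by (simp add: Bochner_Integration.integral_sum Bochner_Integration.integrable_sum Sm_int)
  also have "\<dots> = (\<Sum>l\<le>L. gam A {e 0<..e (2^L)})"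
    unfolding gam_col by (intro sum.cong refl RM_sum assms) auto
  finally show "(\<integral>x. RMaj e L (col A x) \<partial>M) = (L+1) * gam A {e 0<..e (2^L)}" by simp
qed

definition UX :: "nat set \<Rightarrow> (nat \<Rightarrow> nat) \<Rightarrow> nat \<Rightarrow> 'a \<Rightarrow> real" where
  "UX A e t x = (1 / max 1 (real (e t))) * (\<Sum>n\<in>{e t<..e (Suc t)}. (Sm A {n<..e (Suc t)} x)\<^sup>2)"

definition MX :: "nat set \<Rightarrow> (nat \<Rightarrow> nat) \<Rightarrow> nat \<Rightarrow> 'a \<Rightarrow> real" where
  "MX A e L x = 4 * (Sm A {e 0<..e (2^L)} x)\<^sup>2 + 4 * (L+1) * RMaj e L (col A x)
      + 2 * (\<Sum>t<2^L. UX A e t x)"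

lemma UX_nonneg: "UX A e t x \<ge> 0"
  unfolding UX_def by (auto intro!: sum_nonneg divide_nonneg_nonneg)

lemma MX_nonneg: "MX A e L x \<ge> 0"
  unfolding MX_def using RMaj_nonneg UX_nonneg by (auto intro!: add_nonneg_nonneg sum_nonneg)

definition spaced :: "(nat \<Rightarrow> nat) \<Rightarrow> nat \<Rightarrow> bool" where
  "spaced e N \<longleftrightarrow> mono e \<and> (\<forall>t<N. e (Suc t) - e t \<le> 4 * max 1 (e t))"

lemma UX_int:
  assumes "A \<subseteq> {0<..}" "finite A" "spaced e N" "t < N"
  shows "integrable M (UX A e t)" "(\<integral>x. UX A e t x \<partial>M) \<le> 4 * gam A {e t<..e (Suc t)}"
proof -
  show "integrable M (UX A e t)"
    unfolding UX_def[abs_def] using assms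
    by (auto intro!: Bochner_Integration.integrable_sum Sm_int integrable_mult_right)
  have "(\<integral>x. UX A e t x \<partial>M) = (1 / max 1 (real (e t))) * (\<Sum>n\<in>{e t<..e (Suc t)}. gam A {n<..e (Suc t)})"
    unfolding UX_def using assms
    by (simp add: Bochner_Integration.integral_sum Bochner_Integration.integrable_sum Sm_int)
  also have "\<dots> \<le> (1 / max 1 (real (e t))) * (\<Sum>n\<in>{e t<..e (Suc t)}. gam A {e t<..e (Suc t)})"
    by (intro mult_left_mono sum_mono gam_mono2) auto
  also have "\<dots> = (real (e (Suc t) - e t) / max 1 (real (e t))) * gam A {e t<..e (Suc t)}"
    by simp
  also have "\<dots> \<le> 4 * gam A {e t<..e (Suc t)}"
  proof (intro mult_right_mono gam_nonneg)
    have "e (Suc t) - e t \<le> 4 * max 1 (e t)"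
      using assms(3,4) unfolding spaced_def by blast
    then have "real (e (Suc t) - e t) \<le> real (4 * max 1 (e t))"
      by (simp only: of_nat_le_iff)
    also have "real (4 * max 1 (e t)) = 4 * max 1 (real (e t))" by simp
    finally have "real (e (Suc t) - e t) \<le> 4 * max 1 (real (e t))" .
    then show "real (e (Suc t) - e t) / max 1 (real (e t)) \<le> 4"
      by (simp add: divide_le_eq)
  qed
  finally show "(\<integral>x. UX A e t x \<partial>M) \<le> 4 * gam A {e t<..e (Suc t)}" .
qed

lemma MX_int:
  fixes L :: nat and e :: "nat \<Rightarrow> nat"
  assumes "A \<subseteq> {0<..}" "finite A" "spaced e (2^L)"
  shows "integrable M (MX A e L)" "(\<integral>x. MX A e L x \<partial>M) \<le> 16 * (L+1)^2 * gam A {e 0<..e (2^L)}"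
proof -
  have m: "mono e" using assms unfolding spaced_def by auto
  note U = UX_int[OF assms(1,2,3)]
  show "integrable M (MX A e L)"
    unfolding MX_def[abs_def] using assms U RMaj_col_int[OF assms(1,2) m]
    by (intro Bochner_Integration.integrable_add integrable_mult_right Bochner_Integration.integrable_sum) auto
  have iR: "integrable M (\<lambda>x. RMaj e L (col A x))" using RMaj_col_int[OF assms(1,2) m] by blast
  have iS: "integrable M (\<lambda>x. \<Sum>t<2^L. UX A e t x)"
    using U by (intro Bochner_Integration.integrable_sum) auto
  have iF: "integrable M (\<lambda>x. (Sm A {e 0<..e (2^L)} x)\<^sup>2)" using assms by simp
  have "(\<integral>x. MX A e L x \<partial>M) = 4 * (\<integral>x. (Sm A {e 0<..e (2^L)} x)\<^sup>2 \<partial>M)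
      + 4 * (L+1) * (\<integral>x. RMaj e L (col A x) \<partial>M) + 2 * (\<integral>x. (\<Sum>t<2^L. UX A e t x) \<partial>M)"
    unfolding MX_def using iR iS iF
    by (simp add: Bochner_Integration.integral_add Bochner_Integration.integrable_add)
  also have "\<dots> = 4 * gam A {e 0<..e (2^L)} + 4 * (L+1) * ((L+1) * gam A {e 0<..e (2^L)})
     + 2 * (\<Sum>t<2^L. (\<integral>x. UX A e t x \<partial>M))"
    using assms U RMaj_col_int[OF assms(1,2) m]
    by (simp add: Bochner_Integration.integral_sum)
  finally have eqM: "(\<integral>x. MX A e L x \<partial>M) = 4 * gam A {e 0<..e (2^L)} + 4 * (L+1) * ((L+1) * gam A {e 0<..e (2^L)})
     + 2 * (\<Sum>t<2^L. (\<integral>x. UX A e t x \<partial>M))" .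
  have "(\<Sum>t<2^L. (\<integral>x. UX A e t x \<partial>M)) \<le> (\<Sum>t<(2::nat)^L. 4 * gam A {e t<..e (Suc t)})"
    using U by (intro sum_mono) auto
  also have "\<dots> = 4 * gam A {e 0<..e (2^L)}"
    unfolding gam_col sum_distrib_left[symmetric] using grid_sum[OF m] by simp
  finally have hU: "(\<Sum>t<2^L. (\<integral>x. UX A e t x \<partial>M)) \<le> 4 * gam A {e 0<..e (2^L)}" .
  have "(\<integral>x. MX A e L x \<partial>M) \<le> (12 + 4 * (L+1)^2) * gam A {e 0<..e (2^L)}"
    unfolding eqM using hU by (simp add: algebra_simps power2_eq_square)
  also have "\<dots> \<le> 16 * (L+1)^2 * gam A {e 0<..e (2^L)}"
    by (intro mult_right_mono gam_nonneg) (simp add: power2_eq_square)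
  finally show "(\<integral>x. MX A e L x \<partial>M) \<le> 16 * (L+1)^2 * gam A {e 0<..e (2^L)}" .
qed

end


lemma grid_sum_Q:
  fixes f :: "nat \<Rightarrow> 'b::ab_group_add"
  assumes "mono e"
  shows "(\<Sum>n\<in>{e 0<..e N} \<inter> {..Q}. f n) = (\<Sum>t<N. \<Sum>n\<in>{e t<..e (Suc t)} \<inter> {..Q}. f n)"
  using grid_sum[OF assms, of "\<lambda>n. if n \<in> {..Q} then f n else 0" N]
  by (simp add: sum.inter_restrict)

lemma card_le_Q: "card ({a<..b} \<inter> {..Q}) \<le> (Q::nat)"
proof -
  have "{a<..b} \<inter> {..Q} \<subseteq> {1..Q}" by auto
  then show ?thesis using card_mono[of "{1..Q}"] by fastforce
qed

lemma sq_add_le: "(a + b)\<^sup>2 \<le> 2 * a\<^sup>2 + 2 * (b::real)\<^sup>2"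
proof -
  have "0 \<le> (a - b)\<^sup>2" by simp
  then show ?thesis by (simp add: power2_eq_square algebra_simps)
qed

lemma sq_diff_le: "(a - b)\<^sup>2 \<le> 2 * a\<^sup>2 + 2 * (b::real)\<^sup>2"
  using sq_add_le[of a "-b"] by simp

context dbl begin

lemma UX_point:
  assumes "spaced e N" "t < N"
  shows "(\<Sum>n\<in>{e t<..e (Suc t)} \<inter> {..Q}. (Sm A {n<..e (Suc t)} x)\<^sup>2) \<le> Q * UX A e t x"
proof (cases "{e t<..e (Suc t)} \<inter> {..Q} = {}")
  case True
  then show ?thesis using UX_nonneg[of A e t x] by simp
next
  case False
  then obtain n where n: "e t < n" "n \<le> Q" by auto
  then have Q: "max 1 (real (e t)) \<le> Q" by simp
  have "(\<Sum>n\<in>{e t<..e (Suc t)} \<inter> {..Q}. (Sm A {n<..e (Suc t)} x)\<^sup>2)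
      \<le> (\<Sum>n\<in>{e t<..e (Suc t)}. (Sm A {n<..e (Suc t)} x)\<^sup>2)"
    by (intro sum_mono2) auto
  also have "\<dots> = max 1 (real (e t)) * UX A e t x"
    unfolding UX_def by simp
  also have "\<dots> \<le> Q * UX A e t x"
    by (intro mult_right_mono Q UX_nonneg)
  finally show ?thesis .
qed

lemma MX_point:
  fixes L :: nat and e :: "nat \<Rightarrow> nat"
  assumes sp: "spaced e (2^L)"
  shows "(\<Sum>n\<in>{e 0<..e (2^L)} \<inter> {..Q}. (Sm A {n<..e (2^L)} x)\<^sup>2) \<le> Q * MX A e L x"
proof -
  have m: "mono e" using sp unfolding spaced_def by auto
  define N where "N = (2::nat)^L"
  define K where "K = 4 * (Sm A {e 0<..e N} x)\<^sup>2 + 4 * (L+1) * RMaj e L (col A x)"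
  have K0: "K \<ge> 0" unfolding K_def using RMaj_nonneg by auto
  have pt: "(Sm A {n<..e N} x)\<^sup>2 \<le> 2 * (Sm A {n<..e (Suc t)} x)\<^sup>2 + K"
    if t: "t < N" and n: "n \<in> {e t<..e (Suc t)}" for t n
  proof -
    have le1: "e (Suc t) \<le> e N" using m t by (auto simp: mono_def)
    have le0: "e 0 \<le> e (Suc t)" using m by (auto simp: mono_def)
    have s1: "Sm A {n<..e N} x = Sm A {n<..e (Suc t)} x + Sm A {e (Suc t)<..e N} x"
      using n le1 by (intro Sm_split2) auto
    have s2: "Sm A {e 0<..e N} x = Sm A {e 0<..e (Suc t)} x + Sm A {e (Suc t)<..e N} x"
      using le0 le1 by (intro Sm_split2) auto
    have P: "(Sm A {e 0<..e (Suc t)} x)\<^sup>2 \<le> (L+1) * RMaj e L (col A x)"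
      unfolding Sm_col using RM_bound[OF m, of "Suc t" L "col A x"] t N_def by (simp add: add.commute)
    have "(Sm A {n<..e N} x)\<^sup>2 \<le> 2 * (Sm A {n<..e (Suc t)} x)\<^sup>2 + 2 * (Sm A {e 0<..e N} x - Sm A {e 0<..e (Suc t)} x)\<^sup>2"
      unfolding s1 using s2 sq_add_le by simp
    also have "(Sm A {e 0<..e N} x - Sm A {e 0<..e (Suc t)} x)\<^sup>2 \<le> 2 * (Sm A {e 0<..e N} x)\<^sup>2 + 2 * (Sm A {e 0<..e (Suc t)} x)\<^sup>2"
      by (rule sq_diff_le)
    finally show ?thesis using P unfolding K_def by (simp add: algebra_simps)
  qed
  have "(\<Sum>n\<in>{e 0<..e N} \<inter> {..Q}. (Sm A {n<..e N} x)\<^sup>2)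
      = (\<Sum>t<N. \<Sum>n\<in>{e t<..e (Suc t)} \<inter> {..Q}. (Sm A {n<..e N} x)\<^sup>2)"
    by (rule grid_sum_Q[OF m])
  also have "\<dots> \<le> (\<Sum>t<N. \<Sum>n\<in>{e t<..e (Suc t)} \<inter> {..Q}. 2 * (Sm A {n<..e (Suc t)} x)\<^sup>2 + K)"
    by (intro sum_mono pt) auto
  also have "\<dots> = 2 * (\<Sum>t<N. \<Sum>n\<in>{e t<..e (Suc t)} \<inter> {..Q}. (Sm A {n<..e (Suc t)} x)\<^sup>2)
      + (\<Sum>t<N. \<Sum>n\<in>{e t<..e (Suc t)} \<inter> {..Q}. K)"
    by (simp add: sum.distrib sum_distrib_left)
  also have "(\<Sum>t<N. \<Sum>n\<in>{e t<..e (Suc t)} \<inter> {..Q}. K) = (\<Sum>n\<in>{e 0<..e N} \<inter> {..Q}. K)"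
    by (rule grid_sum_Q[OF m, symmetric])
  also have "\<dots> \<le> Q * K"
    using card_le_Q[of "e 0" "e N" Q] K0 by (simp add: mult_right_mono)
  also have "(\<Sum>t<N. \<Sum>n\<in>{e t<..e (Suc t)} \<inter> {..Q}. (Sm A {n<..e (Suc t)} x)\<^sup>2) \<le> (\<Sum>t<N. Q * UX A e t x)"
    using sp by (intro sum_mono UX_point) (auto simp: N_def)
  finally have "(\<Sum>n\<in>{e 0<..e N} \<inter> {..Q}. (Sm A {n<..e N} x)\<^sup>2) \<le> 2 * (\<Sum>t<N. Q * UX A e t x) + Q * K"
    by simp
  also have "\<dots> = Q * MX A e L x"
    unfolding MX_def K_def N_def by (simp add: sum_distrib_left algebra_simps)
  finally show ?thesis unfolding N_def .
qed

end


context dbl begin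

definition row :: "nat set \<Rightarrow> 'a \<Rightarrow> nat \<Rightarrow> real" where
  "row B x j = (\<Sum>k\<in>B. c j k * \<psi> j k x)"

lemma Sm_row: "Sm A B x = (\<Sum>j\<in>A. row B x j)"
  unfolding Sm_def row_def ..

lemma gam_row: "gam A B = (\<Sum>j\<in>A. \<Sum>k\<in>B. (c j k)\<^sup>2)"
  unfolding gam_def ..

lemma Sm_split1:
  assumes "a \<le> b" "b \<le> d"
  shows "Sm {a<..d} B x = Sm {a<..b} B x + Sm {b<..d} B x"
  unfolding Sm_row using iv_split[OF assms] .

lemma gam_mono1:
  assumes "A \<subseteq> A'" "finite A'"
  shows "gam A B \<le> gam A' B"
  unfolding gam_row using assms by (intro sum_mono2) (auto intro!: sum_nonneg)

lemma Sm_int_ii[simp]: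
  "integrable M (\<lambda>x. (Sm {a<..b} {a'<..b'} x)\<^sup>2)"
  "(\<integral>x. (Sm {a<..b} {a'<..b'} x)\<^sup>2 \<partial>M) = gam {a<..b} {a'<..b'}"
  using Sm_int[of "{a<..b}" "{a'<..b'}"] by auto

lemma RMaj_row:
  "RMaj e L (row B x) = (\<Sum>l\<le>L. \<Sum>u<2^(L-l). (Sm {e (u*2^l)<..e ((Suc u)*2^l)} B x)\<^sup>2)"
  unfolding RMaj_def Sm_row ..

lemma RMaj_row_int:
  fixes L :: nat and e :: "nat \<Rightarrow> nat"
  assumes "mono e"
  shows "integrable M (\<lambda>x. RMaj e L (row {a<..b} x))"
    "(\<integral>x. RMaj e L (row {a<..b} x) \<partial>M) = (L+1) * gam {e 0<..e (2^L)} {a<..b}"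
proof -
  show "integrable M (\<lambda>x. RMaj e L (row {a<..b} x))"
    unfolding RMaj_row by (auto intro!: Bochner_Integration.integrable_sum)
  have "(\<integral>x. RMaj e L (row {a<..b} x) \<partial>M) = (\<Sum>l\<le>L. \<Sum>u<2^(L-l). gam {e (u*2^l)<..e ((Suc u)*2^l)} {a<..b})"
    unfolding RMaj_row by (simp add: Bochner_Integration.integral_sum)
  also have "\<dots> = (\<Sum>l\<le>L. gam {e 0<..e (2^L)} {a<..b})"
    unfolding gam_row by (intro sum.cong refl RM_sum assms) auto
  finally show "(\<integral>x. RMaj e L (row {a<..b} x) \<partial>M) = (L+1) * gam {e 0<..e (2^L)} {a<..b}" by simp
qed

lemma ratio4:
  assumes "spaced e N" "t < N"
  shows "real (card {e t<..e (Suc t)}) / max 1 (real (e t)) \<le> 4"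
proof -
  have "e (Suc t) - e t \<le> 4 * max 1 (e t)"
    using assms unfolding spaced_def by blast
  then have "real (e (Suc t) - e t) \<le> real (4 * max 1 (e t))"
    by (simp only: of_nat_le_iff)
  also have "real (4 * max 1 (e t)) = 4 * max 1 (real (e t))" by simp
  finally show ?thesis by (simp add: divide_le_eq)
qed

definition RMaj2 :: "(nat \<Rightarrow> nat) \<Rightarrow> nat \<Rightarrow> (nat \<Rightarrow> nat) \<Rightarrow> nat \<Rightarrow> 'a \<Rightarrow> real" where
  "RMaj2 e L e' L' x = (\<Sum>l\<le>L. \<Sum>u<2^(L-l). RMaj e' L' (col {e (u*2^l)<..e ((Suc u)*2^l)} x))"

definition USL :: "(nat \<Rightarrow> nat) \<Rightarrow> nat \<Rightarrow> (nat \<Rightarrow> nat) \<Rightarrow> nat \<Rightarrow> 'a \<Rightarrow> real" where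
  "USL e t e' L' x = (1 / max 1 (real (e t))) * (\<Sum>m\<in>{e t<..e (Suc t)}. RMaj e' L' (col {e t<..m} x))"

definition ULS :: "(nat \<Rightarrow> nat) \<Rightarrow> nat \<Rightarrow> (nat \<Rightarrow> nat) \<Rightarrow> nat \<Rightarrow> 'a \<Rightarrow> real" where
  "ULS e L e' s x = (1 / max 1 (real (e' s))) * (\<Sum>n\<in>{e' s<..e' (Suc s)}. RMaj e L (row {e' s<..n} x))"

definition USS :: "(nat \<Rightarrow> nat) \<Rightarrow> nat \<Rightarrow> (nat \<Rightarrow> nat) \<Rightarrow> nat \<Rightarrow> 'a \<Rightarrow> real" where
  "USS e t e' s x = (1 / max 1 (real (e t))) * (\<Sum>m\<in>{e t<..e (Suc t)}.
      (1 / max 1 (real (e' s))) * (\<Sum>n\<in>{e' s<..e' (Suc s)}. (Sm {e t<..m} {e' s<..n} x)\<^sup>2))"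

definition MZ :: "(nat \<Rightarrow> nat) \<Rightarrow> nat \<Rightarrow> (nat \<Rightarrow> nat) \<Rightarrow> nat \<Rightarrow> 'a \<Rightarrow> real" where
  "MZ e L e' L' x = 5 * ((Sm {e 0<..e (2^L)} {e' 0<..e' (2^L')} x)\<^sup>2
     + (L+1) * (L'+1) * RMaj2 e L e' L' x
     + (L'+1) * (\<Sum>t<2^L. USL e t e' L' x)
     + (L+1) * (\<Sum>s<2^L'. ULS e L e' s x)
     + (\<Sum>t<2^L. \<Sum>s<2^L'. USS e t e' s x))"

lemma RMaj2_nonneg: "RMaj2 e L e' L' x \<ge> 0"
  unfolding RMaj2_def by (intro sum_nonneg RMaj_nonneg)
lemma USL_nonneg: "USL e t e' L' x \<ge> 0"
  unfolding USL_def by (intro mult_nonneg_nonneg sum_nonneg RMaj_nonneg) auto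
lemma ULS_nonneg: "ULS e L e' s x \<ge> 0"
  unfolding ULS_def by (intro mult_nonneg_nonneg sum_nonneg RMaj_nonneg) auto
lemma USS_nonneg: "USS e t e' s x \<ge> 0"
  unfolding USS_def by (intro mult_nonneg_nonneg sum_nonneg) auto
lemma MZ_nonneg: "MZ e L e' L' x \<ge> 0"
  unfolding MZ_def using RMaj2_nonneg USL_nonneg ULS_nonneg USS_nonneg
  by (intro mult_nonneg_nonneg add_nonneg_nonneg sum_nonneg) auto

lemma gam_grid1:
  assumes "mono e"
  shows "(\<Sum>t<N. gam {e t<..e (Suc t)} B) = gam {e 0<..e N} B"
  unfolding gam_row using grid_sum[OF assms] .

lemma gam_grid2:
  assumes "mono e"
  shows "(\<Sum>t<N. gam A {e t<..e (Suc t)}) = gam A {e 0<..e N}"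
  unfolding gam_col using grid_sum[OF assms] .

lemma avg_int_le:
  fixes g :: "nat \<Rightarrow> real"
  assumes "spaced e N" "t < N" "\<And>m. m \<in> {e t<..e (Suc t)} \<Longrightarrow> g m \<le> G" "G \<ge> 0"
  shows "(1 / max 1 (real (e t))) * (\<Sum>m\<in>{e t<..e (Suc t)}. g m) \<le> 4 * G"
proof -
  have "(\<Sum>m\<in>{e t<..e (Suc t)}. g m) \<le> (\<Sum>m\<in>{e t<..e (Suc t)}. G)"
    using assms(3) by (intro sum_mono) auto
  then have "(1 / max 1 (real (e t))) * (\<Sum>m\<in>{e t<..e (Suc t)}. g m)
      \<le> (real (card {e t<..e (Suc t)}) / max 1 (real (e t))) * G"
    by (simp add: divide_right_mono)
  also have "\<dots> \<le> 4 * G"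
    using assms(4) by (intro mult_right_mono ratio4[OF assms(1,2)])
  finally show ?thesis .
qed

lemma MZ_int:
  fixes L L' :: nat and e e' :: "nat \<Rightarrow> nat"
  assumes sp: "spaced e (2^L)" and sp': "spaced e' (2^L')"
  shows "integrable M (MZ e L e' L')"
    "(\<integral>x. MZ e L e' L' x \<partial>M) \<le> 130 * ((L+1)^2 * (L'+1)^2) * gam {e 0<..e (2^L)} {e' 0<..e' (2^L')}"
proof -
  have m: "mono e" using sp unfolding spaced_def by auto
  have m': "mono e'" using sp' unfolding spaced_def by auto
  define G where "G = gam {e 0<..e (2^L)} {e' 0<..e' (2^L')}"
  have G0: "G \<ge> 0" unfolding G_def by (rule gam_nonneg)
  have iR2: "integrable M (RMaj2 e L e' L')"
    unfolding RMaj2_def[abs_def] using RMaj_col_int[OF _ _ m'] by (auto intro!: Bochner_Integration.integrable_sum)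
  have R2: "(\<integral>x. RMaj2 e L e' L' x \<partial>M) = (L+1) * (L'+1) * G"
  proof -
    have "(\<integral>x. RMaj2 e L e' L' x \<partial>M) = (\<Sum>l\<le>L. \<Sum>u<2^(L-l). (L'+1) * gam {e (u*2^l)<..e ((Suc u)*2^l)} {e' 0<..e' (2^L')})"
      unfolding RMaj2_def using RMaj_col_int[OF _ _ m']
      by (simp add: Bochner_Integration.integral_sum Bochner_Integration.integrable_sum)
    also have "\<dots> = (\<Sum>l\<le>L. (L'+1) * G)"
      unfolding sum_distrib_left[symmetric] G_def gam_row by (intro sum.cong refl arg_cong2[where f=times] RM_sum m) auto
    finally show ?thesis by (simp add: algebra_simps)
  qed
  have iUSL: "integrable M (USL e t e' L')" for t
    unfolding USL_def[abs_def] using RMaj_col_int[OF _ _ m']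
    by (auto intro!: Bochner_Integration.integrable_sum integrable_mult_right)
  have USLi: "(\<integral>x. USL e t e' L' x \<partial>M) \<le> 4 * ((L'+1) * gam {e t<..e (Suc t)} {e' 0<..e' (2^L')})"
    if t: "t < 2^L" for t
  proof -
    have "(\<integral>x. USL e t e' L' x \<partial>M) = (1 / max 1 (real (e t))) * (\<Sum>m\<in>{e t<..e (Suc t)}. (L'+1) * gam {e t<..m} {e' 0<..e' (2^L')})"
      unfolding USL_def using RMaj_col_int[OF _ _ m']
      by (simp add: Bochner_Integration.integral_sum Bochner_Integration.integrable_sum)
    also have "\<dots> \<le> 4 * ((L'+1) * gam {e t<..e (Suc t)} {e' 0<..e' (2^L')})"
      by (intro avg_int_le[OF sp t] mult_left_mono gam_mono1 mult_nonneg_nonneg gam_nonneg) auto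
    finally show ?thesis .
  qed
  have iULS: "integrable M (ULS e L e' s)" for s
    unfolding ULS_def[abs_def] using RMaj_row_int[OF m]
    by (auto intro!: Bochner_Integration.integrable_sum integrable_mult_right)
  have ULSi: "(\<integral>x. ULS e L e' s x \<partial>M) \<le> 4 * ((L+1) * gam {e 0<..e (2^L)} {e' s<..e' (Suc s)})"
    if s: "s < 2^L'" for s
  proof -
    have "(\<integral>x. ULS e L e' s x \<partial>M) = (1 / max 1 (real (e' s))) * (\<Sum>n\<in>{e' s<..e' (Suc s)}. (L+1) * gam {e 0<..e (2^L)} {e' s<..n})"
      unfolding ULS_def using RMaj_row_int[OF m]
      by (simp add: Bochner_Integration.integral_sum Bochner_Integration.integrable_sum)
    also have "\<dots> \<le> 4 * ((L+1) * gam {e 0<..e (2^L)} {e' s<..e' (Suc s)})"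
      by (intro avg_int_le[OF sp' s] mult_left_mono gam_mono2 mult_nonneg_nonneg gam_nonneg) auto
    finally show ?thesis .
  qed
  have iUSS: "integrable M (USS e t e' s)" for t s
    unfolding USS_def[abs_def]
    by (auto intro!: Bochner_Integration.integrable_sum integrable_mult_right)
  have USSi: "(\<integral>x. USS e t e' s x \<partial>M) \<le> 4 * (4 * gam {e t<..e (Suc t)} {e' s<..e' (Suc s)})"
    if t: "t < 2^L" and s: "s < 2^L'" for t s
  proof -
    have "(\<integral>x. USS e t e' s x \<partial>M) = (1 / max 1 (real (e t))) * (\<Sum>m\<in>{e t<..e (Suc t)}.
      (1 / max 1 (real (e' s))) * (\<Sum>n\<in>{e' s<..e' (Suc s)}. gam {e t<..m} {e' s<..n}))"
      unfolding USS_def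
      by (simp add: Bochner_Integration.integral_sum Bochner_Integration.integrable_sum)
    also have "\<dots> \<le> 4 * (4 * gam {e t<..e (Suc t)} {e' s<..e' (Suc s)})"
    proof (intro avg_int_le[OF sp t] mult_nonneg_nonneg gam_nonneg)
      fix m assume "m \<in> {e t<..e (Suc t)}"
      then show "(1 / max 1 (real (e' s))) * (\<Sum>n\<in>{e' s<..e' (Suc s)}. gam {e t<..m} {e' s<..n})
          \<le> 4 * gam {e t<..e (Suc t)} {e' s<..e' (Suc s)}"
        by (intro avg_int_le[OF sp' s] order_trans[OF gam_mono1 gam_mono2] gam_nonneg) auto
    qed auto
    finally show ?thesis .
  qed
  show "integrable M (MZ e L e' L')"
    unfolding MZ_def[abs_def] using iR2 iUSL iULS iUSS
    by (intro integrable_mult_right Bochner_Integration.integrable_add Bochner_Integration.integrable_sum) auto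
  have "(\<integral>x. MZ e L e' L' x \<partial>M) = 5 * (G + (L+1) * (L'+1) * ((L+1) * (L'+1) * G)
     + (L'+1) * (\<Sum>t<2^L. (\<integral>x. USL e t e' L' x \<partial>M))
     + (L+1) * (\<Sum>s<2^L'. (\<integral>x. ULS e L e' s x \<partial>M))
     + (\<Sum>t<2^L. \<Sum>s<2^L'. (\<integral>x. USS e t e' s x \<partial>M)))"
    unfolding MZ_def using iR2 iUSL iULS iUSS R2
    by (simp add: Bochner_Integration.integral_sum Bochner_Integration.integrable_sum
          Bochner_Integration.integral_add Bochner_Integration.integrable_add G_def)
       (simp add: algebra_simps)
  moreover have "(\<Sum>t<2^L. (\<integral>x. USL e t e' L' x \<partial>M)) \<le> 4 * (L'+1) * G"
  proof -
    have "(\<Sum>t<2^L. (\<integral>x. USL e t e' L' x \<partial>M)) \<le> (\<Sum>t<(2::nat)^L. 4 * ((L'+1) * gam {e t<..e (Suc t)} {e' 0<..e' (2^L')}))"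
      using USLi by (intro sum_mono) auto
    also have "\<dots> = 4 * (L'+1) * G"
      unfolding G_def sum_distrib_left[symmetric] gam_grid1[OF m] by simp
    finally show ?thesis .
  qed
  moreover have "(\<Sum>s<2^L'. (\<integral>x. ULS e L e' s x \<partial>M)) \<le> 4 * (L+1) * G"
  proof -
    have "(\<Sum>s<2^L'. (\<integral>x. ULS e L e' s x \<partial>M)) \<le> (\<Sum>s<(2::nat)^L'. 4 * ((L+1) * gam {e 0<..e (2^L)} {e' s<..e' (Suc s)}))"
      using ULSi by (intro sum_mono) auto
    also have "\<dots> = 4 * (L+1) * G"
      unfolding G_def sum_distrib_left[symmetric] gam_grid2[OF m'] by simp
    finally show ?thesis .
  qed
  moreover have "(\<Sum>t<2^L. \<Sum>s<2^L'. (\<integral>x. USS e t e' s x \<partial>M)) \<le> 16 * G"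
  proof -
    have "(\<Sum>t<2^L. \<Sum>s<2^L'. (\<integral>x. USS e t e' s x \<partial>M))
       \<le> (\<Sum>t<(2::nat)^L. \<Sum>s<(2::nat)^L'. 4 * (4 * gam {e t<..e (Suc t)} {e' s<..e' (Suc s)}))"
      using USSi by (intro sum_mono) auto
    also have "\<dots> = 16 * G"
      unfolding G_def sum_distrib_left[symmetric] gam_grid2[OF m'] gam_grid1[OF m] by simp
    finally show ?thesis .
  qed
  ultimately have "(\<integral>x. MZ e L e' L' x \<partial>M) \<le> 5 * (G + (L+1) * (L'+1) * ((L+1) * (L'+1) * G)
     + (L'+1) * (4 * (L'+1) * G) + (L+1) * (4 * (L+1) * G) + 16 * G)"
    by (smt (verit) mult_left_mono of_nat_0_le_iff)
  also have "\<dots> \<le> 130 * ((L+1)^2 * (L'+1)^2) * G"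
  proof -
    define X where "X = real ((L+1)^2 * (L'+1)^2)"
    have n1: "(L+1)^2 \<le> (L+1)^2 * (L'+1)^2" by simp
    have n2: "(L'+1)^2 \<le> (L+1)^2 * (L'+1)^2" by simp
    have n3: "1 \<le> (L+1)^2 * (L'+1)^2" by simp
    have h1: "real ((L+1)^2) * G \<le> X * G" unfolding X_def using n1 G0 by (intro mult_right_mono) simp_all
    have h2: "real ((L'+1)^2) * G \<le> X * G" unfolding X_def using n2 G0 by (intro mult_right_mono) simp_all
    have X1: "1 \<le> X" unfolding X_def using n3 of_nat_le_iff[of 1 "(L+1)^2 * (L'+1)^2", where 'a=real] by simp
    have h3: "G \<le> X * G" using mult_right_mono[OF X1 G0] by simp
    have eq: "5 * (G + (L+1) * (L'+1) * ((L+1) * (L'+1) * G) + (L'+1) * (4 * (L'+1) * G) + (L+1) * (4 * (L+1) * G) + 16 * G)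
       = 5 * (17 * G + X * G + 4 * (real ((L'+1)^2) * G) + 4 * (real ((L+1)^2) * G))"
      unfolding X_def by (simp add: power2_eq_square algebra_simps)
    have eq2: "real (130 * ((L+1)^2 * (L'+1)^2)) * G = 130 * (X * G)" unfolding X_def by simp
    have lin5: "a \<le> y \<Longrightarrow> b \<le> y \<Longrightarrow> g \<le> y \<Longrightarrow> 5*(17*g + y + 4*a + 4*b) \<le> 130*(y::real)"
      for a b g y by (simp add: algebra_simps)
    show ?thesis unfolding eq eq2 by (rule lin5[OF h2 h1 h3])
  qed
  finally show "(\<integral>x. MZ e L e' L' x \<partial>M) \<le> 130 * ((L+1)^2 * (L'+1)^2) * gam {e 0<..e (2^L)} {e' 0<..e' (2^L')}"
    unfolding G_def .
qed

end


lemma avg_point: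
  fixes g :: "nat \<Rightarrow> real"
  assumes "\<And>m. m \<in> {e t<..e (Suc t)} \<Longrightarrow> g m \<ge> 0"
  shows "(\<Sum>m\<in>{e t<..e (Suc t)} \<inter> {..P}. g m) \<le> P * ((1 / max 1 (real (e t))) * (\<Sum>m\<in>{e t<..e (Suc t)}. g m))"
proof (cases "{e t<..e (Suc t)} \<inter> {..P} = {}")
  case True
  then show ?thesis using assms by (auto intro!: mult_nonneg_nonneg divide_nonneg_nonneg sum_nonneg)
next
  case False
  then obtain n where n: "e t < n" "n \<le> P" by auto
  then have Q: "max 1 (real (e t)) \<le> P" by simp
  have "(\<Sum>m\<in>{e t<..e (Suc t)} \<inter> {..P}. g m) \<le> (\<Sum>m\<in>{e t<..e (Suc t)}. g m)"
    using assms by (intro sum_mono2) auto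
  also have "\<dots> = max 1 (real (e t)) * ((1 / max 1 (real (e t))) * (\<Sum>m\<in>{e t<..e (Suc t)}. g m))"
    by simp
  also have "\<dots> \<le> P * ((1 / max 1 (real (e t))) * (\<Sum>m\<in>{e t<..e (Suc t)}. g m))"
    using assms by (intro mult_right_mono Q mult_nonneg_nonneg sum_nonneg) auto
  finally show ?thesis .
qed

lemma const_grid:
  fixes C :: real and P :: nat and e :: "nat \<Rightarrow> nat"
  assumes "mono e" "C \<ge> 0"
  shows "(\<Sum>t<N. \<Sum>m\<in>{e t<..e (Suc t)} \<inter> {..P}. C) \<le> P * C"
proof -
  have "(\<Sum>t<N. \<Sum>m\<in>{e t<..e (Suc t)} \<inter> {..P}. C) = (\<Sum>m\<in>{e 0<..e N} \<inter> {..P}. C)"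
    by (rule grid_sum_Q[OF assms(1), symmetric])
  also have "\<dots> \<le> P * C"
    using card_le_Q[of "e 0" "e N" P] assms(2) by (simp add: mult_right_mono)
  finally show ?thesis .
qed

lemma five_sq: "(f - (a + b + c + d))\<^sup>2 \<le> 5 * (f\<^sup>2 + a\<^sup>2 + b\<^sup>2 + c\<^sup>2 + (d::real)\<^sup>2)"
proof -
  have "(\<Sum>i\<in>{0..<5::nat}. ([f, -a, -b, -c, -d] ! i))\<^sup>2 \<le> (\<Sum>i\<in>{0..<5::nat}. ([f, -a, -b, -c, -d] ! i)\<^sup>2) * card {0..<5::nat}"
    by (rule sum_squared_le_sum_of_squares)
  then show ?thesis by (simp add: numeral_eq_Suc algebra_simps)
qed

context dbl begin

lemma R0_bound:
  fixes L L' :: nat and e e' :: "nat \<Rightarrow> nat"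
  assumes m: "mono e" and m': "mono e'" and t: "t \<le> 2^L" and s: "s \<le> 2^L'"
  shows "(Sm {e 0<..e t} {e' 0<..e' s} x)\<^sup>2 \<le> (L+1) * (L'+1) * RMaj2 e L e' L' x"
proof -
  have A: "(Sm {e 0<..e t} {e' 0<..e' s} x)\<^sup>2 \<le> (L+1) * RMaj e L (row {e' 0<..e' s} x)"
    unfolding Sm_row using RM_bound[OF m t] by (simp add: add.commute)
  have "RMaj e L (row {e' 0<..e' s} x) = (\<Sum>l\<le>L. \<Sum>u<2^(L-l). (Sm {e (u*2^l)<..e ((Suc u)*2^l)} {e' 0<..e' s} x)\<^sup>2)"
    by (rule RMaj_row)
  also have "\<dots> \<le> (\<Sum>l\<le>L. \<Sum>u<2^(L-l). (L'+1) * RMaj e' L' (col {e (u*2^l)<..e ((Suc u)*2^l)} x))"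
    by (intro sum_mono) (unfold Sm_col, use RM_bound[OF m' s] in \<open>simp add: add.commute\<close>)
  also have "\<dots> = (L'+1) * RMaj2 e L e' L' x"
    unfolding RMaj2_def by (simp add: sum_distrib_left)
  finally have B: "RMaj e L (row {e' 0<..e' s} x) \<le> (L'+1) * RMaj2 e L e' L' x" .
  have "(L+1) * RMaj e L (row {e' 0<..e' s} x) \<le> (L+1) * ((L'+1) * RMaj2 e L e' L' x)"
    by (intro mult_left_mono B) simp
  with A show ?thesis by (simp add: algebra_simps)
qed

lemma Z_pt:
  fixes L L' :: nat and e e' :: "nat \<Rightarrow> nat"
  assumes sp: "spaced e (2^L)" and sp': "spaced e' (2^L')" and t: "t < 2^L" and s: "s < 2^L'"
    and mm: "m \<in> {e t<..e (Suc t)}" and nn: "n \<in> {e' s<..e' (Suc s)}"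
  shows "(Sm {e 0<..e (2^L)} {e' 0<..e' (2^L')} x - Sm {e 0<..m} {e' 0<..n} x)\<^sup>2
    \<le> 5 * ((Sm {e 0<..e (2^L)} {e' 0<..e' (2^L')} x)\<^sup>2 + (L+1) * (L'+1) * RMaj2 e L e' L' x
        + (L'+1) * RMaj e' L' (col {e t<..m} x) + (L+1) * RMaj e L (row {e' s<..n} x)
        + (Sm {e t<..m} {e' s<..n} x)\<^sup>2)"
proof -
  have m: "mono e" using sp unfolding spaced_def by auto
  have m': "mono e'" using sp' unfolding spaced_def by auto
  have et: "e 0 \<le> e t" "e t \<le> m" using m mm by (auto simp: mono_def)
  have es: "e' 0 \<le> e' s" "e' s \<le> n" using m' nn by (auto simp: mono_def)
  have dec: "Sm {e 0<..m} {e' 0<..n} x = Sm {e 0<..e t} {e' 0<..e' s} x + Sm {e t<..m} {e' 0<..e' s} x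
      + Sm {e 0<..e t} {e' s<..n} x + Sm {e t<..m} {e' s<..n} x"
    using Sm_split1[OF et, of "{e' 0<..n}" x] Sm_split2[OF es, of "{e 0<..e t}" x] Sm_split2[OF es, of "{e t<..m}" x]
    by simp
  have b1: "(Sm {e 0<..e t} {e' 0<..e' s} x)\<^sup>2 \<le> (L+1) * (L'+1) * RMaj2 e L e' L' x"
    using R0_bound[OF m m'] t s by simp
  have b2: "(Sm {e t<..m} {e' 0<..e' s} x)\<^sup>2 \<le> (L'+1) * RMaj e' L' (col {e t<..m} x)"
    unfolding Sm_col using RM_bound[OF m', of s L'] s by (simp add: add.commute)
  have b3: "(Sm {e 0<..e t} {e' s<..n} x)\<^sup>2 \<le> (L+1) * RMaj e L (row {e' s<..n} x)"
    unfolding Sm_row using RM_bound[OF m, of t L] t by (simp add: add.commute)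
  show ?thesis unfolding dec using five_sq b1 b2 b3
    by (smt (verit, best) mult_left_mono)
qed

lemma MZ_point:
  fixes L L' :: nat and e e' :: "nat \<Rightarrow> nat" and P Q :: nat
  assumes sp: "spaced e (2^L)" and sp': "spaced e' (2^L')"
  shows "(\<Sum>m\<in>{e 0<..e (2^L)} \<inter> {..P}. \<Sum>n\<in>{e' 0<..e' (2^L')} \<inter> {..Q}.
           (Sm {e 0<..e (2^L)} {e' 0<..e' (2^L')} x - Sm {e 0<..m} {e' 0<..n} x)\<^sup>2)
         \<le> P * Q * MZ e L e' L' x"
proof -
  have m: "mono e" using sp unfolding spaced_def by auto
  have m': "mono e'" using sp' unfolding spaced_def by auto
  define F where "F = Sm {e 0<..e (2^L)} {e' 0<..e' (2^L')} x"
  define C0 where "C0 = F\<^sup>2 + (L+1) * (L'+1) * RMaj2 e L e' L' x"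
  define A1 where "A1 = C0 + (L+1) * (\<Sum>s<2^L'. ULS e L e' s x)"
  define V where "V t m = RMaj e' L' (col {e t<..m} x)" for t m
  define W where "W s n = RMaj e L (row {e' s<..n} x)" for s n
  define S where "S t m s n = (Sm {e t<..m} {e' s<..n} x)\<^sup>2" for t m s n
  define W2 where "W2 t m s = (1 / max 1 (real (e' s))) * (\<Sum>n\<in>{e' s<..e' (Suc s)}. S t m s n)" for t m s
  have C0: "C0 \<ge> 0" unfolding C0_def using RMaj2_nonneg by auto
  have A1: "A1 \<ge> 0" unfolding A1_def using C0 ULS_nonneg
    by (intro add_nonneg_nonneg mult_nonneg_nonneg sum_nonneg) auto
  have V0: "V t m \<ge> 0" for t m unfolding V_def by (rule RMaj_nonneg)
  have W20: "W2 t m s \<ge> 0" for t m s unfolding W2_def S_def by (auto intro!: divide_nonneg_nonneg sum_nonneg)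
  have inner: "(\<Sum>n\<in>{e' 0<..e' (2^L')} \<inter> {..Q}. (F - Sm {e 0<..m} {e' 0<..n} x)\<^sup>2)
      \<le> 5 * Q * (A1 + (L'+1) * V t m + (\<Sum>s<2^L'. W2 t m s))"
    if t: "t < 2^L" and mm: "m \<in> {e t<..e (Suc t)}" for t m
  proof -
    have "(\<Sum>n\<in>{e' 0<..e' (2^L')} \<inter> {..Q}. (F - Sm {e 0<..m} {e' 0<..n} x)\<^sup>2)
        = (\<Sum>s<2^L'. \<Sum>n\<in>{e' s<..e' (Suc s)} \<inter> {..Q}. (F - Sm {e 0<..m} {e' 0<..n} x)\<^sup>2)"
      by (rule grid_sum_Q[OF m'])
    also have "\<dots> \<le> (\<Sum>s<2^L'. \<Sum>n\<in>{e' s<..e' (Suc s)} \<inter> {..Q}.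
        5 * ((C0 + (L'+1) * V t m) + (L+1) * W s n + S t m s n))"
    proof (intro sum_mono)
      fix s n assume s: "s \<in> {..<2^L'}" and n: "n \<in> {e' s<..e' (Suc s)} \<inter> {..Q}"
      show "(F - Sm {e 0<..m} {e' 0<..n} x)\<^sup>2 \<le> 5 * ((C0 + (L'+1) * V t m) + (L+1) * W s n + S t m s n)"
        using Z_pt[OF sp sp' t _ mm, of s n x] s n unfolding F_def C0_def V_def W_def S_def
        by (simp add: algebra_simps)
    qed
    also have "\<dots> = 5 * ((\<Sum>s<2^L'. \<Sum>n\<in>{e' s<..e' (Suc s)} \<inter> {..Q}. C0 + (L'+1) * V t m)
        + (L+1) * (\<Sum>s<2^L'. \<Sum>n\<in>{e' s<..e' (Suc s)} \<inter> {..Q}. W s n)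
        + (\<Sum>s<2^L'. \<Sum>n\<in>{e' s<..e' (Suc s)} \<inter> {..Q}. S t m s n))"
      by (simp add: sum.distrib sum_distrib_left del: sum_constant)
    also have "\<dots> \<le> 5 * (Q * (C0 + (L'+1) * V t m) + (L+1) * (\<Sum>s<2^L'. Q * ULS e L e' s x)
        + (\<Sum>s<2^L'. Q * W2 t m s))"
    proof -
      have 1: "(\<Sum>s<2^L'. \<Sum>n\<in>{e' s<..e' (Suc s)} \<inter> {..Q}. C0 + (L'+1) * V t m) \<le> Q * (C0 + (L'+1) * V t m)"
        using C0 V0 by (intro const_grid m') auto
      have 2: "(\<Sum>s<2^L'. \<Sum>n\<in>{e' s<..e' (Suc s)} \<inter> {..Q}. W s n) \<le> (\<Sum>s<2^L'. Q * ULS e L e' s x)"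
        unfolding ULS_def W_def by (intro sum_mono avg_point RMaj_nonneg)
      have 3: "(\<Sum>s<2^L'. \<Sum>n\<in>{e' s<..e' (Suc s)} \<inter> {..Q}. S t m s n) \<le> (\<Sum>s<2^L'. Q * W2 t m s)"
        unfolding W2_def S_def by (intro sum_mono avg_point) auto
      have "(L+1) * (\<Sum>s<2^L'. \<Sum>n\<in>{e' s<..e' (Suc s)} \<inter> {..Q}. W s n) \<le> (L+1) * (\<Sum>s<2^L'. Q * ULS e L e' s x)"
        using 2 by (intro mult_left_mono) auto
      then show ?thesis using 1 3 by (intro mult_left_mono add_mono) auto
    qed
    also have "\<dots> = 5 * Q * (A1 + (L'+1) * V t m + (\<Sum>s<2^L'. W2 t m s))"
      unfolding A1_def by (simp add: sum_distrib_left algebra_simps)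
    finally show ?thesis .
  qed
  have "(\<Sum>m\<in>{e 0<..e (2^L)} \<inter> {..P}. \<Sum>n\<in>{e' 0<..e' (2^L')} \<inter> {..Q}. (F - Sm {e 0<..m} {e' 0<..n} x)\<^sup>2)
      = (\<Sum>t<2^L. \<Sum>m\<in>{e t<..e (Suc t)} \<inter> {..P}. \<Sum>n\<in>{e' 0<..e' (2^L')} \<inter> {..Q}. (F - Sm {e 0<..m} {e' 0<..n} x)\<^sup>2)"
    by (rule grid_sum_Q[OF m])
  also have "\<dots> \<le> (\<Sum>t<2^L. \<Sum>m\<in>{e t<..e (Suc t)} \<inter> {..P}. 5 * Q * (A1 + (L'+1) * V t m + (\<Sum>s<2^L'. W2 t m s)))"
    by (intro sum_mono inner) auto
  also have "\<dots> = 5 * Q * ((\<Sum>t<2^L. \<Sum>m\<in>{e t<..e (Suc t)} \<inter> {..P}. A1)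
      + (L'+1) * (\<Sum>t<2^L. \<Sum>m\<in>{e t<..e (Suc t)} \<inter> {..P}. V t m)
      + (\<Sum>t<2^L. \<Sum>s<2^L'. \<Sum>m\<in>{e t<..e (Suc t)} \<inter> {..P}. W2 t m s))"
  proof -
    have E1: "(\<Sum>t<2^L. \<Sum>m\<in>{e t<..e (Suc t)} \<inter> {..P}. 5 * Q * (A1 + (L'+1) * V t m + (\<Sum>s<2^L'. W2 t m s)))
      = 5 * Q * (\<Sum>t<2^L. \<Sum>m\<in>{e t<..e (Suc t)} \<inter> {..P}. (A1 + (L'+1) * V t m + (\<Sum>s<2^L'. W2 t m s)))"
      by (simp only: sum_distrib_left)
    have E2: "(\<Sum>t<2^L. \<Sum>m\<in>{e t<..e (Suc t)} \<inter> {..P}. (A1 + (L'+1) * V t m + (\<Sum>s<2^L'. W2 t m s)))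
      = (\<Sum>t<2^L. \<Sum>m\<in>{e t<..e (Suc t)} \<inter> {..P}. A1)
      + (L'+1) * (\<Sum>t<2^L. \<Sum>m\<in>{e t<..e (Suc t)} \<inter> {..P}. V t m)
      + (\<Sum>t<2^L. \<Sum>m\<in>{e t<..e (Suc t)} \<inter> {..P}. \<Sum>s<2^L'. W2 t m s)"
      by (simp only: sum.distrib sum_distrib_left)
    have E3: "(\<Sum>t<2^L. \<Sum>m\<in>{e t<..e (Suc t)} \<inter> {..P}. \<Sum>s<2^L'. W2 t m s)
      = (\<Sum>t<2^L. \<Sum>s<2^L'. \<Sum>m\<in>{e t<..e (Suc t)} \<inter> {..P}. W2 t m s)"
      by (intro sum.cong refl sum.swap)
    show ?thesis unfolding E1 E2 E3 ..
  qed
  also have "\<dots> \<le> 5 * Q * (P * A1 + (L'+1) * (\<Sum>t<2^L. P * USL e t e' L' x)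
      + (\<Sum>t<2^L. \<Sum>s<2^L'. P * USS e t e' s x))"
  proof -
    have 1: "(\<Sum>t<2^L. \<Sum>m\<in>{e t<..e (Suc t)} \<inter> {..P}. A1) \<le> P * A1"
      using A1 by (intro const_grid m) auto
    have 2: "(\<Sum>t<2^L. \<Sum>m\<in>{e t<..e (Suc t)} \<inter> {..P}. V t m) \<le> (\<Sum>t<2^L. P * USL e t e' L' x)"
      unfolding USL_def V_def by (intro sum_mono avg_point RMaj_nonneg)
    have 3: "(\<Sum>t<2^L. \<Sum>s<2^L'. \<Sum>m\<in>{e t<..e (Suc t)} \<inter> {..P}. W2 t m s) \<le> (\<Sum>t<2^L. \<Sum>s<2^L'. P * USS e t e' s x)"
      unfolding USS_def W2_def S_def by (intro sum_mono avg_point) (auto intro!: divide_nonneg_nonneg sum_nonneg)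
    have "(L'+1) * (\<Sum>t<2^L. \<Sum>m\<in>{e t<..e (Suc t)} \<inter> {..P}. V t m) \<le> (L'+1) * (\<Sum>t<2^L. P * USL e t e' L' x)"
      using 2 by (intro mult_left_mono) auto
    then have "(\<Sum>t<2^L. \<Sum>m\<in>{e t<..e (Suc t)} \<inter> {..P}. A1)
      + (L'+1) * (\<Sum>t<2^L. \<Sum>m\<in>{e t<..e (Suc t)} \<inter> {..P}. V t m)
      + (\<Sum>t<2^L. \<Sum>s<2^L'. \<Sum>m\<in>{e t<..e (Suc t)} \<inter> {..P}. W2 t m s)
      \<le> P * A1 + (L'+1) * (\<Sum>t<2^L. P * USL e t e' L' x) + (\<Sum>t<2^L. \<Sum>s<2^L'. P * USS e t e' s x)"
      using 1 3 by linarith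
    then show ?thesis by (intro mult_left_mono) auto
  qed
  also have "\<dots> = P * Q * MZ e L e' L' x"
    unfolding MZ_def A1_def C0_def F_def by (simp add: sum_distrib_left algebra_simps)
  finally show ?thesis unfolding F_def .
qed

end


definition nu :: "nat \<Rightarrow> nat" where "nu i = (if i = 0 then 0 else 2^(2^i))"
definition eg :: "nat \<Rightarrow> nat \<Rightarrow> nat" where "eg i t = (if i = 0 then 4*t else 2^(2^i + t))"

lemma eg0: "eg i 0 = nu i" unfolding eg_def nu_def by simp

lemma egtop: "eg i (2^i) = nu (Suc i)"
  unfolding eg_def nu_def by (simp add: mult_2)

lemma nu_Suc_gt: "nu i < nu (Suc i)"
  unfolding nu_def by (auto intro: power_strict_increasing)

lemma nu_smono: "strict_mono nu"
  using nu_Suc_gt by (rule strict_monoI_Suc)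

lemma nu_mono: "mono nu"
  using nu_smono strict_mono_mono by blast

lemma nu_ge: "i \<le> nu (Suc i)"
proof -
  have h: "nu (Suc i) = 2^(2^(Suc i))" unfolding nu_def by simp
  have "Suc i < 2^(Suc i)" by (rule less_exp)
  moreover have "2^(Suc i) < (2::nat)^(2^(Suc i))" by (rule less_exp)
  ultimately show ?thesis unfolding h by linarith
qed

definition beta :: "nat \<Rightarrow> nat" where "beta j = (LEAST i. j \<le> nu (Suc i))"

lemma beta_le: "j \<le> nu (Suc (beta j))"
  unfolding beta_def by (rule LeastI[of _ j]) (rule nu_ge)

lemma beta_gt: "j \<ge> 1 \<Longrightarrow> nu (beta j) < j"
proof (cases "beta j")
  case 0
  then show "j \<ge> 1 \<Longrightarrow> nu (beta j) < j" by (simp add: nu_def)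
next
  case (Suc i)
  then have "\<not> j \<le> nu (Suc i)"
    using not_less_Least[of i "\<lambda>i. j \<le> nu (Suc i)"] unfolding beta_def by simp
  then show ?thesis using Suc by simp
qed

lemma beta_in: "j \<ge> 1 \<Longrightarrow> j \<in> {nu (beta j)<..nu (Suc (beta j))}"
  using beta_le beta_gt by auto

lemma beta_eq: assumes "j \<in> {nu i<..nu (Suc i)}" shows "beta j = i"
proof -
  have j1: "j \<ge> 1" using assms by auto
  have A: "nu (beta j) < j" "j \<le> nu (Suc (beta j))" using beta_le beta_gt[OF j1] by auto
  show ?thesis
  proof (rule ccontr)
    assume "beta j \<noteq> i"
    then consider "beta j < i" | "i < beta j" by linarith
    then show False
    proof cases
      case 1
      then have "nu (Suc (beta j)) \<le> nu i" using nu_mono by (auto simp: mono_def)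
      then show False using A assms by auto
    next
      case 2
      then have "nu (Suc i) \<le> nu (beta j)" using nu_mono by (auto simp: mono_def)
      then show False using A assms by auto
    qed
  qed
qed

lemma beta_mono: "j \<le> j' \<Longrightarrow> beta j \<le> beta j'"
  unfolding beta_def by (meson Least_le LeastI_ex le_trans nu_ge)

lemma beta_big: "nu i0 < j \<Longrightarrow> i0 \<le> beta j"
proof (rule ccontr)
  assume "nu i0 < j" "\<not> i0 \<le> beta j"
  then have "Suc (beta j) \<le> i0" by simp
  then have "nu (Suc (beta j)) \<le> nu i0" using nu_mono by (auto simp: mono_def)
  then show False using beta_le[of j] \<open>nu i0 < j\<close> by simp
qed

lemma beta_at_top: "filterlim beta at_top sequentially"
  unfolding filterlim_at_top
proof
  fix i0
  show "eventually (\<lambda>j. i0 \<le> beta j) sequentially"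
    by (rule eventually_mono[OF eventually_gt_at_top[of "nu i0"]]) (rule beta_big)
qed

definition wt :: "nat \<Rightarrow> real" where "wt j = log 2 (log 2 (real j + 3))"

lemma wt_ge1: "j \<ge> 1 \<Longrightarrow> wt j \<ge> 1"
proof -
  assume j: "j \<ge> 1"
  have "(2::real) \<le> log 2 (real j + 3)"
  proof -
    have "log 2 (2^2) \<le> log 2 (real j + 3)" using j by (subst log_le_cancel_iff) auto
    moreover have "log 2 ((2::real)^2) = 2" using log_pow_cancel[of "2::real" 2] by (simp only: of_nat_numeral)
    ultimately show ?thesis by linarith
  qed
  then have "log 2 2 \<le> log 2 (log 2 (real j + 3))" by (subst log_le_cancel_iff) auto
  then show ?thesis unfolding wt_def by simp
qed

lemma wt_blk: assumes "j \<in> {nu i<..nu (Suc i)}" shows "(real i + 1)^2 \<le> 4 * (wt j)^2"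
proof -
  have j1: "j \<ge> 1" using assms by auto
  have w1: "wt j \<ge> 1" by (rule wt_ge1[OF j1])
  have "real i + 1 \<le> 2 * wt j"
  proof (cases "i = 0")
    case True then show ?thesis using w1 by simp
  next
    case False
    then have "2^(2^i) < j" using assms by (simp add: nu_def)
    then have "(2::real)^(2^i) < real j + 3"
      by (metis of_nat_less_iff of_nat_numeral of_nat_power add_increasing2 less_imp_le of_nat_0_le_iff
          order_less_le_trans zero_le_numeral le_add_same_cancel1)
    then have a: "real (2^i) < log 2 (real j + 3)" by (intro less_log_of_power) auto
    then have "(2::real)^i < log 2 (real j + 3)" by simp
    then have "real i < wt j" unfolding wt_def by (intro less_log_of_power) auto
    then show ?thesis using False by simp
  qed
  then have "(real i + 1)^2 \<le> (2 * wt j)^2" by (intro power_mono) auto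
  then show ?thesis by (simp add: power_mult_distrib)
qed

context dbl begin

lemma eg_spaced: "spaced (eg i) (2^i)"
  unfolding spaced_def
proof (intro conjI allI impI)
  show "mono (eg i)"
    unfolding eg_def mono_def by (auto intro: power_increasing)
  fix t assume "t < (2::nat)^i"
  show "eg i (Suc t) - eg i t \<le> 4 * max 1 (eg i t)"
    unfolding eg_def by auto
qed

end


lemma K0_bound:
  fixes c :: "nat \<Rightarrow> nat \<Rightarrow> real" and I L :: nat
  assumes coef: "(\<lambda>(j, k). (c j k)\<^sup>2 * (log 2 (log 2 (real j + 3)))\<^sup>2 * (log 2 (log 2 (real k + 3)))\<^sup>2)
                 summable_on ({1..} \<times> {1..})"
  shows "(\<Sum>i<I. \<Sum>l<L. (real i+1)^2 * (real l+1)^2 * (\<Sum>j\<in>{nu i<..nu (Suc i)}. \<Sum>k\<in>{nu l<..nu (Suc l)}. (c j k)\<^sup>2))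
     \<le> 16 * infsum (\<lambda>(j, k). (c j k)\<^sup>2 * (log 2 (log 2 (real j + 3)))\<^sup>2 * (log 2 (log 2 (real k + 3)))\<^sup>2) ({1..} \<times> {1..})"
proof -
  define g where "g j k = (c j k)\<^sup>2 * (wt j)\<^sup>2 * (wt k)\<^sup>2" for j k
  have g0: "g j k \<ge> 0" for j k unfolding g_def by auto
  have "(\<Sum>i<I. \<Sum>l<L. (real i+1)^2 * (real l+1)^2 * (\<Sum>j\<in>{nu i<..nu (Suc i)}. \<Sum>k\<in>{nu l<..nu (Suc l)}. (c j k)\<^sup>2))
     = (\<Sum>i<I. \<Sum>l<L. \<Sum>j\<in>{nu i<..nu (Suc i)}. \<Sum>k\<in>{nu l<..nu (Suc l)}. (real i+1)^2 * (real l+1)^2 * (c j k)\<^sup>2)"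
    by (simp add: sum_distrib_left)
  also have "\<dots> \<le> (\<Sum>i<I. \<Sum>l<L. \<Sum>j\<in>{nu i<..nu (Suc i)}. \<Sum>k\<in>{nu l<..nu (Suc l)}. 16 * g j k)"
  proof (intro sum_mono)
    fix i l j k assume j: "j \<in> {nu i<..nu (Suc i)}" and k: "k \<in> {nu l<..nu (Suc l)}"
    have "(real i+1)^2 * (real l+1)^2 \<le> (4 * (wt j)\<^sup>2) * (4 * (wt k)\<^sup>2)"
      using wt_blk[OF j] wt_blk[OF k] by (intro mult_mono) auto
    then have "(real i+1)^2 * (real l+1)^2 * (c j k)\<^sup>2 \<le> (4 * (wt j)\<^sup>2) * (4 * (wt k)\<^sup>2) * (c j k)\<^sup>2"
      by (intro mult_right_mono) auto
    then show "(real i+1)^2 * (real l+1)^2 * (c j k)\<^sup>2 \<le> 16 * g j k"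
      unfolding g_def by (simp add: algebra_simps)
  qed
  also have "\<dots> = 16 * (\<Sum>i<I. \<Sum>l<L. \<Sum>j\<in>{nu i<..nu (Suc i)}. \<Sum>k\<in>{nu l<..nu (Suc l)}. g j k)"
    by (simp add: sum_distrib_left)
  also have "(\<Sum>i<I. \<Sum>l<L. \<Sum>j\<in>{nu i<..nu (Suc i)}. \<Sum>k\<in>{nu l<..nu (Suc l)}. g j k)
      = (\<Sum>i<I. \<Sum>j\<in>{nu i<..nu (Suc i)}. \<Sum>l<L. \<Sum>k\<in>{nu l<..nu (Suc l)}. g j k)"
    by (intro sum.cong refl sum.swap)
  also have "\<dots> = (\<Sum>i<I. \<Sum>j\<in>{nu i<..nu (Suc i)}. \<Sum>k\<in>{nu 0<..nu L}. g j k)"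
    by (intro sum.cong refl grid_sum[OF nu_mono])
  also have "\<dots> = (\<Sum>j\<in>{nu 0<..nu I}. \<Sum>k\<in>{nu 0<..nu L}. g j k)"
    by (rule grid_sum[OF nu_mono])
  also have "\<dots> = (\<Sum>(j,k)\<in>{nu 0<..nu I} \<times> {nu 0<..nu L}. g j k)"
    by (simp add: sum.cartesian_product)
  also have "\<dots> \<le> infsum (\<lambda>(j, k). g j k) ({1..} \<times> {1..})"
  proof (rule finite_sum_le_infsum)
    show "(\<lambda>(j, k). g j k) summable_on {1..} \<times> {1..}" using coef unfolding g_def wt_def by simp
    show "{nu 0<..nu I} \<times> {nu 0<..nu L} \<subseteq> {1..} \<times> {1..}" by auto
  qed (use g0 in auto)
  finally show ?thesis unfolding g_def wt_def by simp
qed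

lemma ennreal_dsum_le:
  fixes b :: "nat \<Rightarrow> nat \<Rightarrow> real"
  assumes b0: "\<And>i l. b i l \<ge> 0" and bK: "\<And>I L. (\<Sum>i<I. \<Sum>l<L. b i l) \<le> K"
  shows "(\<Sum>i. \<Sum>l. ennreal (b i l)) \<le> ennreal K"
proof -
  have "(\<Sum>i<n. \<Sum>l. ennreal (b i l)) \<le> ennreal K" for n
  proof -
    have "(\<Sum>i<n. \<Sum>l. ennreal (b i l)) = (\<Sum>l. \<Sum>i<n. ennreal (b i l))"
      by (rule suminf_sum[symmetric]) auto
    also have "\<dots> \<le> ennreal K"
      unfolding suminf_eq_SUP
    proof (rule SUP_least)
      fix L
      have "(\<Sum>l<L. \<Sum>i<n. ennreal (b i l)) = ennreal (\<Sum>l<L. \<Sum>i<n. b i l)"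
        using b0 by (simp add: sum_nonneg)
      also have "\<dots> = ennreal (\<Sum>i<n. \<Sum>l<L. b i l)" by (rule arg_cong[where f=ennreal], rule sum.swap)
      also have "\<dots> \<le> ennreal K" using bK by (intro ennreal_leI) auto
      finally show "(\<Sum>l<L. \<Sum>i<n. ennreal (b i l)) \<le> ennreal K" .
    qed
    finally show ?thesis .
  qed
  then show ?thesis unfolding suminf_eq_SUP[of "\<lambda>i. \<Sum>l. ennreal (b i l)"] by (rule SUP_least)
qed

lemma dsum_summable:
  fixes a :: "nat \<Rightarrow> nat \<Rightarrow> real"
  assumes a0: "\<And>i l. a i l \<ge> 0" and fin: "(\<Sum>i. \<Sum>l. ennreal (a i l)) \<noteq> top"
  shows "summable (a i)" "summable (\<lambda>i. suminf (a i))"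
proof -
  have lt: "(\<Sum>i. \<Sum>l. ennreal (a i l)) < top" using fin by (simp add: less_top)
  have fi: "(\<Sum>l. ennreal (a i l)) \<noteq> top" for i
    using ennreal_suminf_lessD[OF lt, of i] by simp
  show s: "summable (a i)" for i
    by (rule summable_suminf_not_top[OF a0 fi])
  have eq: "(\<Sum>l. ennreal (a i l)) = ennreal (suminf (a i))" for i
    by (rule suminf_ennreal2[OF a0 s])
  have f2: "(\<Sum>i. ennreal (suminf (a i))) \<noteq> top" unfolding eq[symmetric] by (rule fin)
  show "summable (\<lambda>i. suminf (a i))"
    by (rule summable_suminf_not_top[OF suminf_nonneg[OF s a0] f2])
qed


definition om :: "nat \<Rightarrow> nat \<Rightarrow> real" where
  "om l Q = min 1 (real (nu (Suc l)) / real Q)"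

lemma om_nonneg: "om l Q \<ge> 0" unfolding om_def by auto
lemma om_le1: "om l Q \<le> 1" unfolding om_def by auto

lemma om_mult: "Q \<ge> 1 \<Longrightarrow> real Q * om l Q = min (real Q) (real (nu (Suc l)))"
  unfolding om_def by (auto simp: min_def field_simps)

lemma om_tendsto: "(om l \<longlongrightarrow> 0) sequentially"
proof -
  have "((\<lambda>Q. real (nu (Suc l)) / real Q) \<longlongrightarrow> 0) sequentially"
    by (intro tendsto_divide_0[OF tendsto_const] filterlim_at_top_imp_at_infinity[OF filterlim_real_sequentially])
  then have "((\<lambda>Q. min 1 (real (nu (Suc l)) / real Q)) \<longlongrightarrow> min 1 0) sequentially"
    by (intro tendsto_min tendsto_const)
  then show ?thesis unfolding om_def[abs_def] by simp
qed

lemma TS: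
  fixes b :: "nat \<Rightarrow> real"
  assumes b0: "\<And>l. b l \<ge> 0" and sb: "summable b"
  shows "((\<lambda>Q. \<Sum>l. om l Q * b l) \<longlongrightarrow> 0) sequentially"
proof -
  have "((\<lambda>Q. \<Sum>l. om l Q * b l) \<longlongrightarrow> (\<Sum>l. 0 * b l)) sequentially"
  proof (rule tannerys_theorem[THEN conjunct2, THEN conjunct2])
    show "((\<lambda>Q. om l Q * b l) \<longlongrightarrow> 0 * b l) sequentially" for l
      by (intro tendsto_mult om_tendsto tendsto_const)
    show "\<forall>\<^sub>F (l, Q) in at_top \<times>\<^sub>F sequentially. norm (om l Q * b l) \<le> b l"
      using om_nonneg om_le1 b0 by (intro always_eventually) (auto intro!: mult_left_le_one_le)
  qed (use sb in auto)
  then show ?thesis by simp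
qed

lemma CS:
  fixes u :: "nat \<Rightarrow> real"
  assumes u0: "\<And>m. u m \<ge> 0" and lim: "(u \<longlongrightarrow> 0) sequentially"
  shows "((\<lambda>P. (1 / real P) * (\<Sum>m\<in>{1..P}. u m)) \<longlongrightarrow> 0) sequentially"
proof (rule LIMSEQ_I)
  fix r :: real assume r: "r > 0"
  obtain N where N: "\<And>m. m \<ge> N \<Longrightarrow> u m < r / 2"
    using lim r unfolding LIMSEQ_def by (metis dist_real_def diff_zero abs_of_nonneg u0 half_gt_zero)
  define C where "C = (\<Sum>m\<in>{1..N}. u m)"
  have C0: "C \<ge> 0" unfolding C_def using u0 by (auto intro: sum_nonneg)
  obtain N2 :: nat where N2: "real N2 > 2 * C / r" using reals_Archimedean2 by blast
  show "\<exists>no. \<forall>n\<ge>no. norm ((1 / real n) * (\<Sum>m\<in>{1..n}. u m) - 0) < r"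
  proof (intro exI allI impI)
    fix P assume P: "P \<ge> max (Suc N) (Suc N2)"
    then have P1: "real P > 0" by simp
    have "(\<Sum>m\<in>{1..P}. u m) = C + (\<Sum>m\<in>{Suc N..P}. u m)"
      unfolding C_def using P by (subst sum.union_disjoint[symmetric]) (auto intro!: sum.cong)
    also have "(\<Sum>m\<in>{Suc N..P}. u m) \<le> (\<Sum>m\<in>{Suc N..P}. r / 2)"
      by (intro sum_mono less_imp_le N) auto
    also have "\<dots> \<le> real P * (r / 2)" using r by simp
    finally have S: "(\<Sum>m\<in>{1..P}. u m) \<le> C + real P * (r / 2)" by simp
    have "C < real P * (r / 2)"
    proof -
      have "2 * C / r < real P" using N2 P by linarith
      then show ?thesis using r by (simp add: field_simps)
    qed
    then have "(\<Sum>m\<in>{1..P}. u m) < real P * r" using S by linarith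
    then have "(1 / real P) * (\<Sum>m\<in>{1..P}. u m) < r" using P1 by (simp add: field_simps)
    moreover have "(1 / real P) * (\<Sum>m\<in>{1..P}. u m) \<ge> 0" using u0 by (auto intro!: divide_nonneg_nonneg sum_nonneg)
    ultimately show "norm ((1 / real P) * (\<Sum>m\<in>{1..P}. u m) - 0) < r" by simp
  qed
qed

lemma one_to_Q: "{nu 0<..nu (Suc (beta Q))} \<inter> {..Q} = {1..Q}"
  using beta_le[of Q] by (auto simp: nu_def)

lemma blk_sum:
  fixes f :: "nat \<Rightarrow> nat \<Rightarrow> real"
  shows "(\<Sum>n\<in>{1..Q}. f (beta n) n) = (\<Sum>l<Suc (beta Q). \<Sum>n\<in>{nu l<..nu (Suc l)} \<inter> {..Q}. f l n)"
proof -
  have "(\<Sum>n\<in>{1..Q}. f (beta n) n) = (\<Sum>l<Suc (beta Q). \<Sum>n\<in>{nu l<..nu (Suc l)} \<inter> {..Q}. f (beta n) n)"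
    unfolding one_to_Q[symmetric] by (rule grid_sum_Q[OF nu_mono])
  also have "\<dots> = (\<Sum>l<Suc (beta Q). \<Sum>n\<in>{nu l<..nu (Suc l)} \<inter> {..Q}. f l n)"
    by (intro sum.cong refl) (auto simp: beta_eq)
  finally show ?thesis .
qed

lemma card_1P: "(\<Sum>m\<in>{1..P}. (C::real)) = real P * C" by simp

lemma XS:
  fixes V :: "nat \<Rightarrow> nat \<Rightarrow> nat \<Rightarrow> real" and Mb :: "nat \<Rightarrow> nat \<Rightarrow> real" and P Q :: nat
  assumes V0: "\<And>i l n. V i l n \<ge> 0" and Mb0: "\<And>i l. Mb i l \<ge> 0"
    and bb: "\<And>i l Q. (\<Sum>n\<in>{nu l<..nu (Suc l)} \<inter> {..Q}. V i l n) \<le> min (real Q) (real (nu (Suc l))) * Mb i l"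
    and sm: "\<And>l. summable (\<lambda>i. (real i+1)^2 * Mb i l)"
    and Q1: "Q \<ge> 1"
  shows "(\<Sum>m\<in>{1..P}. \<Sum>n\<in>{1..Q}. \<Sum>i<beta m. (real i+1)^2 * V i (beta n) n)
     \<le> real P * real Q * (\<Sum>l<Suc (beta Q). om l Q * (\<Sum>i. (real i+1)^2 * Mb i l))"
proof -
  define I where "I = Suc (beta P)"
  define J where "J = Suc (beta Q)"
  have "(\<Sum>m\<in>{1..P}. \<Sum>n\<in>{1..Q}. \<Sum>i<beta m. (real i+1)^2 * V i (beta n) n)
      \<le> (\<Sum>m\<in>{1..P}. \<Sum>n\<in>{1..Q}. \<Sum>i<I. (real i+1)^2 * V i (beta n) n)"
  proof (intro sum_mono sum_mono2)
    fix m assume "m \<in> {1..P}"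
    then have "beta m \<le> beta P" by (intro beta_mono) auto
    then show "{..<beta m} \<subseteq> {..<I}" unfolding I_def by auto
  qed (use V0 in auto)
  also have "\<dots> = real P * (\<Sum>n\<in>{1..Q}. \<Sum>i<I. (real i+1)^2 * V i (beta n) n)"
    by (rule card_1P)
  finally have st1: "(\<Sum>m\<in>{1..P}. \<Sum>n\<in>{1..Q}. \<Sum>i<beta m. (real i+1)^2 * V i (beta n) n)
      \<le> real P * (\<Sum>n\<in>{1..Q}. \<Sum>i<I. (real i+1)^2 * V i (beta n) n)" .
  have "(\<Sum>n\<in>{1..Q}. \<Sum>i<I. (real i+1)^2 * V i (beta n) n)
      = (\<Sum>i<I. (real i+1)^2 * (\<Sum>n\<in>{1..Q}. V i (beta n) n))"
    by (subst sum.swap) (simp add: sum_distrib_left)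
  also have "\<dots> = (\<Sum>i<I. (real i+1)^2 * (\<Sum>l<J. \<Sum>n\<in>{nu l<..nu (Suc l)} \<inter> {..Q}. V i l n))"
    unfolding J_def by (subst blk_sum) (rule refl)
  also have "\<dots> \<le> (\<Sum>i<I. (real i+1)^2 * (\<Sum>l<J. real Q * om l Q * Mb i l))"
    using bb om_mult[OF Q1] by (intro sum_mono mult_left_mono) auto
  also have "\<dots> = (\<Sum>i<I. \<Sum>l<J. real Q * (om l Q * ((real i+1)^2 * Mb i l)))"
    by (simp add: sum_distrib_left mult_ac)
  also have "\<dots> = (\<Sum>l<J. \<Sum>i<I. real Q * (om l Q * ((real i+1)^2 * Mb i l)))"
    by (rule sum.swap)
  also have "\<dots> = real Q * (\<Sum>l<J. om l Q * (\<Sum>i<I. (real i+1)^2 * Mb i l))"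
    by (simp add: sum_distrib_left mult_ac)
  also have "\<dots> \<le> real Q * (\<Sum>l<J. om l Q * (\<Sum>i. (real i+1)^2 * Mb i l))"
    using om_nonneg Mb0 by (intro mult_left_mono sum_mono sum_le_suminf sm) auto
  finally have st2: "(\<Sum>n\<in>{1..Q}. \<Sum>i<I. (real i+1)^2 * V i (beta n) n)
      \<le> real Q * (\<Sum>l<J. om l Q * (\<Sum>i. (real i+1)^2 * Mb i l))" .
  have "real P * (\<Sum>n\<in>{1..Q}. \<Sum>i<I. (real i+1)^2 * V i (beta n) n)
      \<le> real P * (real Q * (\<Sum>l<J. om l Q * (\<Sum>i. (real i+1)^2 * Mb i l)))"
    by (intro mult_left_mono st2) auto
  then show ?thesis using st1 unfolding J_def by (simp add: mult.assoc)
qed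

lemma ZS:
  fixes W :: "nat \<Rightarrow> nat \<Rightarrow> nat \<Rightarrow> nat \<Rightarrow> real" and Mz :: "nat \<Rightarrow> nat \<Rightarrow> real" and P Q :: nat
  assumes W0: "\<And>i l m n. W i l m n \<ge> 0" and Mz0: "\<And>i l. Mz i l \<ge> 0"
    and bb: "\<And>i l P Q. (\<Sum>m\<in>{nu i<..nu (Suc i)} \<inter> {..P}. \<Sum>n\<in>{nu l<..nu (Suc l)} \<inter> {..Q}. W i l m n)
        \<le> real P * min (real Q) (real (nu (Suc l))) * Mz i l"
    and sm: "\<And>l. summable (\<lambda>i. Mz i l)"
    and Q1: "Q \<ge> 1"
  shows "(\<Sum>m\<in>{1..P}. \<Sum>n\<in>{1..Q}. W (beta m) (beta n) m n)
     \<le> real P * real Q * (\<Sum>l<Suc (beta Q). om l Q * (\<Sum>i. Mz i l))"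
proof -
  define I where "I = Suc (beta P)"
  define J where "J = Suc (beta Q)"
  have "(\<Sum>m\<in>{1..P}. \<Sum>n\<in>{1..Q}. W (beta m) (beta n) m n)
      = (\<Sum>i<I. \<Sum>m\<in>{nu i<..nu (Suc i)} \<inter> {..P}. \<Sum>n\<in>{1..Q}. W i (beta n) m n)"
    unfolding I_def by (rule blk_sum)
  also have "\<dots> = (\<Sum>i<I. \<Sum>m\<in>{nu i<..nu (Suc i)} \<inter> {..P}. \<Sum>l<J. \<Sum>n\<in>{nu l<..nu (Suc l)} \<inter> {..Q}. W i l m n)"
    unfolding J_def by (subst blk_sum) (rule refl)
  also have "\<dots> = (\<Sum>i<I. \<Sum>l<J. \<Sum>m\<in>{nu i<..nu (Suc i)} \<inter> {..P}. \<Sum>n\<in>{nu l<..nu (Suc l)} \<inter> {..Q}. W i l m n)"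
    by (intro sum.cong refl sum.swap)
  also have "\<dots> \<le> (\<Sum>i<I. \<Sum>l<J. real P * (real Q * om l Q) * Mz i l)"
    using bb om_mult[OF Q1] by (intro sum_mono) auto
  also have "\<dots> = real P * real Q * (\<Sum>l<J. om l Q * (\<Sum>i<I. Mz i l))"
    by (subst sum.swap) (simp add: sum_distrib_left algebra_simps)
  also have "\<dots> \<le> real P * real Q * (\<Sum>l<J. om l Q * (\<Sum>i. Mz i l))"
    using om_nonneg Mz0 by (intro mult_left_mono sum_mono sum_le_suminf sm) auto
  finally show ?thesis unfolding J_def .
qed


lemma inv_sq_sum: "(\<Sum>i<I. 1 / (real i + 1)^2) \<le> 2"
proof -
  have A: "(\<Sum>i<Suc I. 1 / (real i + 1)^2) \<le> 2 - 1 / (real I + 1)" for I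
  proof (induction I)
    case 0 then show ?case by simp
  next
    case (Suc I)
    have "(\<Sum>i<Suc (Suc I). 1 / (real i + 1)^2) = (\<Sum>i<Suc I. 1 / (real i + 1)^2) + 1 / (real I + 2)^2"
      by (simp add: add.commute)
    also have "\<dots> \<le> 2 - 1 / (real I + 1) + 1 / (real I + 2)^2" using Suc by simp
    also have "\<dots> \<le> 2 - 1 / (real I + 2)"
    proof -
      have "1 / (real I + 2)^2 \<le> 1 / ((real I + 1) * (real I + 2))"
        by (intro divide_left_mono) (auto simp: power2_eq_square)
      also have "\<dots> = 1 / (real I + 1) - 1 / (real I + 2)"
        by (simp add: field_simps)
      finally show ?thesis by simp
    qed
    finally show ?case by (simp add: add.commute)
  qed
  show ?thesis
  proof (cases I)
    case 0 then show ?thesis by simp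
  next
    case (Suc J) then show ?thesis using A[of J] by (smt (verit) divide_nonneg_nonneg of_nat_0_le_iff)
  qed
qed

lemma WCS: "(\<Sum>i<I. y i)\<^sup>2 \<le> 2 * (\<Sum>i<I. (real i + 1)^2 * (y i :: real)\<^sup>2)"
proof -
  have "(\<Sum>i<I. y i)\<^sup>2 = (\<Sum>i<I. (1 / (real i + 1)) * ((real i + 1) * y i))\<^sup>2"
    by (intro arg_cong[where f="\<lambda>z. z\<^sup>2"] sum.cong refl) (simp add: field_simps)
  also have "\<dots> \<le> (\<Sum>i<I. (1 / (real i + 1))\<^sup>2) * (\<Sum>i<I. ((real i + 1) * y i)\<^sup>2)"
    by (rule Cauchy_Schwarz_ineq_sum)
  also have "\<dots> = (\<Sum>i<I. 1 / (real i + 1)^2) * (\<Sum>i<I. (real i + 1)^2 * (y i)\<^sup>2)"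
    by (simp add: power_divide power_mult_distrib)
  also have "\<dots> \<le> 2 * (\<Sum>i<I. (real i + 1)^2 * (y i)\<^sup>2)"
    by (intro mult_right_mono inv_sq_sum sum_nonneg) auto
  finally show ?thesis .
qed

lemma three_sq: "(a + b + c)\<^sup>2 \<le> 3 * (a\<^sup>2 + b\<^sup>2 + (c::real)\<^sup>2)"
proof -
  have "0 \<le> (a - b)\<^sup>2 + (b - c)\<^sup>2 + (a - c)\<^sup>2" by simp
  then show ?thesis by (simp add: power2_eq_square algebra_simps)
qed

context dbl begin

lemma Sm_grid1: "Sm {nu 0<..nu i} B x = (\<Sum>i'<i. Sm {nu i'<..nu (Suc i')} B x)"
  unfolding Sm_row by (rule grid_sum[OF nu_mono, symmetric])

lemma Sm_grid2: "Sm A {nu 0<..nu l} x = (\<Sum>l'<l. Sm A {nu l'<..nu (Suc l')} x)"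
  unfolding Sm_col by (rule grid_sum[OF nu_mono, symmetric])

lemma DEC:
  assumes m: "m \<in> {nu i<..nu (Suc i)}" and n: "n \<in> {nu l<..nu (Suc l)}"
  shows "Sm {0<..nu (Suc i)} {0<..nu (Suc l)} x - Sm {0<..m} {0<..n} x
    = (\<Sum>i'<i. Sm {nu i'<..nu (Suc i')} {n<..nu (Suc l)} x)
    + (\<Sum>l'<l. Sm {m<..nu (Suc i)} {nu l'<..nu (Suc l')} x)
    + (Sm {nu i<..nu (Suc i)} {nu l<..nu (Suc l)} x - Sm {nu i<..m} {nu l<..n} x)"
proof -
  define a where "a = nu i"
  define a' where "a' = nu (Suc i)"
  define b where "b = nu l"
  define b' where "b' = nu (Suc l)"
  have ma: "a \<le> m" "m \<le> a'" using m unfolding a_def a'_def by auto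
  have nb: "b \<le> n" "n \<le> b'" using n unfolding b_def b'_def by auto
  have e1: "Sm {0<..a'} {0<..b'} x = Sm {0<..a} {0<..b'} x + Sm {a<..a'} {0<..b'} x"
    using ma by (intro Sm_split1) auto
  have e2: "Sm {0<..a} {0<..b'} x = Sm {0<..a} {0<..n} x + Sm {0<..a} {n<..b'} x"
    using nb by (intro Sm_split2) auto
  have e3: "Sm {a<..a'} {0<..b'} x = Sm {a<..a'} {0<..b} x + Sm {a<..a'} {b<..b'} x"
    using nb by (intro Sm_split2) auto
  have e4: "Sm {0<..m} {0<..n} x = Sm {0<..a} {0<..n} x + Sm {a<..m} {0<..n} x"
    using ma by (intro Sm_split1) auto
  have e5: "Sm {a<..m} {0<..n} x = Sm {a<..m} {0<..b} x + Sm {a<..m} {b<..n} x"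
    using nb by (intro Sm_split2) auto
  have e6: "Sm {a<..a'} {0<..b} x = Sm {a<..m} {0<..b} x + Sm {m<..a'} {0<..b} x"
    using ma by (intro Sm_split1) auto
  have f1: "Sm {0<..a} {n<..b'} x = (\<Sum>i'<i. Sm {nu i'<..nu (Suc i')} {n<..nu (Suc l)} x)"
    using Sm_grid1[of i "{n<..b'}" x] unfolding a_def b'_def by (simp add: nu_def)
  have f2: "Sm {m<..a'} {0<..b} x = (\<Sum>l'<l. Sm {m<..nu (Suc i)} {nu l'<..nu (Suc l')} x)"
    using Sm_grid2[of "{m<..a'}" l x] unfolding a'_def b_def by (simp add: nu_def)
  show ?thesis
    using e1 e2 e3 e4 e5 e6 f1 f2 unfolding a_def[symmetric] a'_def[symmetric] b_def[symmetric] b'_def[symmetric]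
    by simp
qed

lemma Hsum: "Sm {0<..nu a} {0<..nu b} x = (\<Sum>i<a. \<Sum>l<b. Sm {nu i<..nu (Suc i)} {nu l<..nu (Suc l)} x)"
proof -
  have "Sm {0<..nu a} {0<..nu b} x = Sm {nu 0<..nu a} {nu 0<..nu b} x" by (simp add: nu_def)
  also have "\<dots> = (\<Sum>i<a. Sm {nu i<..nu (Suc i)} {nu 0<..nu b} x)" by (rule Sm_grid1)
  also have "\<dots> = (\<Sum>i<a. \<Sum>l<b. Sm {nu i<..nu (Suc i)} {nu l<..nu (Suc l)} x)"
    by (intro sum.cong refl Sm_grid2)
  finally show ?thesis .
qed

end

lemma GB:
  fixes F :: "nat \<Rightarrow> nat \<Rightarrow> real"
  assumes s1: "\<And>i. summable (\<lambda>l. \<bar>F i l\<bar>)" and s2: "summable (\<lambda>i. \<Sum>l. \<bar>F i l\<bar>)"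
  shows "\<bar>(\<Sum>i<a. \<Sum>l<b. F i l) - (\<Sum>i. \<Sum>l. F i l)\<bar>
     \<le> (\<Sum>k. (\<Sum>l. \<bar>F (k + a) l\<bar>)) + (\<Sum>i. \<Sum>k. \<bar>F i (k + b)\<bar>)"
proof -
  define t where "t i = (\<Sum>l. \<bar>F i l\<bar>)" for i
  define rho where "rho i = (\<Sum>l. F i l)" for i
  have sF: "summable (F i)" for i using s1 summable_rabs_cancel by blast
  have rt: "\<bar>rho i\<bar> \<le> t i" for i unfolding rho_def t_def by (rule summable_rabs[OF s1])
  have srho: "summable rho"
    by (rule summable_comparison_test[OF _ s2[folded t_def]]) (use rt in auto)
  have srhoa: "summable (\<lambda>i. \<bar>rho i\<bar>)"
    by (rule summable_comparison_test[OF _ s2[folded t_def]]) (use rt in auto)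
  have tail1: "(\<Sum>i. rho i) = (\<Sum>k. rho (k + a)) + (\<Sum>i<a. rho i)"
    by (rule suminf_split_initial_segment[OF srho])
  have tail2: "rho i = (\<Sum>k. F i (k + b)) + (\<Sum>l<b. F i l)" for i
    unfolding rho_def by (rule suminf_split_initial_segment[OF sF])
  have sk: "summable (\<lambda>k. \<bar>F i (k + b)\<bar>)" for i
    using s1[of i] by (subst summable_iff_shift) 
  have st: "summable (\<lambda>i. \<Sum>k. \<bar>F i (k + b)\<bar>)"
  proof (rule summable_comparison_test[OF _ s2])
    show "\<exists>N. \<forall>n\<ge>N. norm (\<Sum>k. \<bar>F n (k + b)\<bar>) \<le> (\<Sum>l. \<bar>F n l\<bar>)"
    proof (intro exI allI impI)
      fix n
      have "(\<Sum>k. \<bar>F n (k + b)\<bar>) \<le> (\<Sum>l. \<bar>F n l\<bar>)"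
        using suminf_split_initial_segment[OF s1[of n], of b] by (simp add: sum_nonneg)
      moreover have "(\<Sum>k. \<bar>F n (k + b)\<bar>) \<ge> 0" by (intro suminf_nonneg sk) auto
      ultimately show "norm (\<Sum>k. \<bar>F n (k + b)\<bar>) \<le> (\<Sum>l. \<bar>F n l\<bar>)" by simp
    qed
  qed
  have "(\<Sum>i. \<Sum>l. F i l) - (\<Sum>i<a. \<Sum>l<b. F i l)
      = (\<Sum>k. rho (k + a)) + (\<Sum>i<a. \<Sum>k. F i (k + b))"
    using tail1 tail2 unfolding rho_def[symmetric] by (simp add: sum.distrib)
  then have A: "\<bar>(\<Sum>i<a. \<Sum>l<b. F i l) - (\<Sum>i. \<Sum>l. F i l)\<bar> \<le> \<bar>\<Sum>k. rho (k + a)\<bar> + \<bar>\<Sum>i<a. \<Sum>k. F i (k + b)\<bar>"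
    by linarith
  have B1: "\<bar>\<Sum>k. rho (k + a)\<bar> \<le> (\<Sum>k. t (k + a))"
  proof -
    have sa: "summable (\<lambda>k. \<bar>rho (k + a)\<bar>)" using srhoa by (subst summable_iff_shift)
    have sta: "summable (\<lambda>k. t (k + a))" using s2[folded t_def] by (subst summable_iff_shift)
    have "\<bar>\<Sum>k. rho (k + a)\<bar> \<le> (\<Sum>k. \<bar>rho (k + a)\<bar>)" by (rule summable_rabs[OF sa])
    also have "\<dots> \<le> (\<Sum>k. t (k + a))" by (intro suminf_le sa sta rt)
    finally show ?thesis .
  qed
  have B2: "\<bar>\<Sum>i<a. \<Sum>k. F i (k + b)\<bar> \<le> (\<Sum>i. \<Sum>k. \<bar>F i (k + b)\<bar>)"
  proof -
    have "\<bar>\<Sum>i<a. \<Sum>k. F i (k + b)\<bar> \<le> (\<Sum>i<a. \<bar>\<Sum>k. F i (k + b)\<bar>)" by (rule sum_abs)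
    also have "\<dots> \<le> (\<Sum>i<a. \<Sum>k. \<bar>F i (k + b)\<bar>)"
      by (intro sum_mono summable_rabs sk)
    also have "\<dots> \<le> (\<Sum>i. \<Sum>k. \<bar>F i (k + b)\<bar>)"
      by (intro sum_le_suminf st) (auto intro!: suminf_nonneg sk)
    finally show ?thesis .
  qed
  show ?thesis using A B1 B2 unfolding t_def by linarith
qed


lemma tail_lim:
  fixes t :: "nat \<Rightarrow> real"
  assumes "summable t"
  shows "((\<lambda>a. \<Sum>k. t (k + a)) \<longlongrightarrow> 0) sequentially"
proof -
  have eq: "(\<Sum>k. t (k + a)) = suminf t - (\<Sum>i<a. t i)" for a
    using suminf_split_initial_segment[OF assms, of a] by simp
  have "((\<lambda>a. suminf t - (\<Sum>i<a. t i)) \<longlongrightarrow> suminf t - suminf t) sequentially"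
    by (intro tendsto_diff tendsto_const summable_LIMSEQ assms)
  then show ?thesis unfolding eq by simp
qed

lemma tail2_lim:
  fixes F :: "nat \<Rightarrow> nat \<Rightarrow> real"
  assumes s1: "\<And>i. summable (\<lambda>l. \<bar>F i l\<bar>)" and s2: "summable (\<lambda>i. \<Sum>l. \<bar>F i l\<bar>)"
  shows "((\<lambda>b. \<Sum>i. \<Sum>k. \<bar>F i (k + b)\<bar>) \<longlongrightarrow> 0) sequentially"
proof -
  have "((\<lambda>b. \<Sum>i. \<Sum>k. \<bar>F i (k + b)\<bar>) \<longlongrightarrow> (\<Sum>i. 0)) sequentially"
  proof (rule tannerys_theorem[THEN conjunct2, THEN conjunct2])
    show "((\<lambda>b. \<Sum>k. \<bar>F i (k + b)\<bar>) \<longlongrightarrow> 0) sequentially" for i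
      by (rule tail_lim[OF s1])
    show "\<forall>\<^sub>F (i, b) in at_top \<times>\<^sub>F sequentially. norm (\<Sum>k. \<bar>F i (k + b)\<bar>) \<le> (\<Sum>l. \<bar>F i l\<bar>)"
    proof (intro always_eventually allI, clarify)
      fix i b
      have sk: "summable (\<lambda>k. \<bar>F i (k + b)\<bar>)" using s1[of i] by (subst summable_iff_shift)
      have "(\<Sum>k. \<bar>F i (k + b)\<bar>) \<le> (\<Sum>l. \<bar>F i l\<bar>)"
        using suminf_split_initial_segment[OF s1[of i], of b] by (simp add: sum_nonneg)
      moreover have "(\<Sum>k. \<bar>F i (k + b)\<bar>) \<ge> 0" by (intro suminf_nonneg sk) auto
      ultimately show "norm (\<Sum>k. \<bar>F i (k + b)\<bar>) \<le> (\<Sum>l. \<bar>F i l\<bar>)" by simp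
    qed
  qed (use s2 in auto)
  then show ?thesis by simp
qed

lemma Suc_beta_at_top: "filterlim (\<lambda>m. Suc (beta m)) at_top sequentially"
  by (rule filterlim_compose[OF filterlim_Suc beta_at_top])

lemma comb: "s \<le> 2*h + 2*d \<Longrightarrow> d \<le> 3*(x + y + z) \<Longrightarrow> h \<le> 2*a + 2*b \<Longrightarrow> x \<le> 2*X \<Longrightarrow> y \<le> 2*Y
   \<Longrightarrow> s \<le> 12*X + 12*Y + 6*z + (4*a + 4*(b::real))"
  unfolding distrib_left by linarith

context dbl begin

lemma PT:
  fixes x :: 'a and gx :: real
  defines "F \<equiv> \<lambda>i l. Sm {nu i<..nu (Suc i)} {nu l<..nu (Suc l)} x"
  assumes sF1: "\<And>i. summable (\<lambda>l. \<bar>F i l\<bar>)" and sF2: "summable (\<lambda>i. \<Sum>l. \<bar>F i l\<bar>)"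
    and G: "gx = (\<Sum>i. \<Sum>l. F i l)"
    and m1: "m \<ge> 1" and n1: "n \<ge> 1"
  shows "(Sm {1..m} {1..n} x - gx)\<^sup>2 \<le>
     12 * (\<Sum>i<beta m. (real i + 1)^2 * (Sm {nu i<..nu (Suc i)} {n<..nu (Suc (beta n))} x)\<^sup>2)
   + 12 * (\<Sum>l<beta n. (real l + 1)^2 * (Sm {m<..nu (Suc (beta m))} {nu l<..nu (Suc l)} x)\<^sup>2)
   + 6 * (F (beta m) (beta n) - Sm {nu (beta m)<..m} {nu (beta n)<..n} x)\<^sup>2
   + (4 * (\<Sum>k. \<Sum>l. \<bar>F (k + Suc (beta m)) l\<bar>)\<^sup>2 + 4 * (\<Sum>i. \<Sum>k. \<bar>F i (k + Suc (beta n))\<bar>)\<^sup>2)"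
proof -
  define i where "i = beta m"
  define l where "l = beta n"
  have mi: "m \<in> {nu i<..nu (Suc i)}" unfolding i_def using beta_in[OF m1] .
  have nl: "n \<in> {nu l<..nu (Suc l)}" unfolding l_def using beta_in[OF n1] .
  define X where "X = (\<Sum>i'<i. Sm {nu i'<..nu (Suc i')} {n<..nu (Suc l)} x)"
  define Y where "Y = (\<Sum>l'<l. Sm {m<..nu (Suc i)} {nu l'<..nu (Suc l')} x)"
  define Z where "Z = F i l - Sm {nu i<..m} {nu l<..n} x"
  define H where "H = Sm {0<..nu (Suc i)} {0<..nu (Suc l)} x - gx"
  define t1 where "t1 = (\<Sum>k. \<Sum>l. \<bar>F (k + Suc i) l\<bar>)"
  define t2 where "t2 = (\<Sum>i. \<Sum>k. \<bar>F i (k + Suc l)\<bar>)"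
  have eq1: "{1..m} = {0<..m}" "{1..n} = {0<..n}" by auto
  have dec: "Sm {1..m} {1..n} x - gx = H - (X + Y + Z)"
    using DEC[OF mi nl, of x] unfolding H_def X_def Y_def Z_def F_def eq1 by simp
  have hs: "Sm {0<..nu (Suc i)} {0<..nu (Suc l)} x = (\<Sum>i'<Suc i. \<Sum>l'<Suc l. F i' l')"
    unfolding F_def by (rule Hsum)
  have Hb: "\<bar>H\<bar> \<le> t1 + t2"
    unfolding H_def hs t1_def t2_def G by (rule GB[OF sF1 sF2, where a="Suc i" and b="Suc l"])
  have sh: "summable (\<lambda>k. \<Sum>l. \<bar>F (k + Suc i) l\<bar>)"
    using summable_iff_shift[of "\<lambda>i. \<Sum>l. \<bar>F i l\<bar>" "Suc i"] sF2 by simp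
  have t1: "t1 \<ge> 0" unfolding t1_def
    by (intro suminf_nonneg sh) (auto intro!: suminf_nonneg sF1)
  have t2: "t2 \<ge> 0" unfolding t2_def
  proof (rule suminf_nonneg)
    show "0 \<le> (\<Sum>k. \<bar>F n (k + Suc l)\<bar>)" for n
    proof -
      have "summable (\<lambda>k. \<bar>F n (k + Suc l)\<bar>)"
        using summable_iff_shift[of "\<lambda>k. \<bar>F n k\<bar>" "Suc l"] sF1[of n] by simp
      then show ?thesis by (intro suminf_nonneg) auto
    qed
    show "summable (\<lambda>i. \<Sum>k. \<bar>F i (k + Suc l)\<bar>)"
    proof (rule summable_comparison_test[OF _ sF2])
      show "\<exists>N. \<forall>n\<ge>N. norm (\<Sum>k. \<bar>F n (k + Suc l)\<bar>) \<le> (\<Sum>l. \<bar>F n l\<bar>)"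
      proof (intro exI allI impI)
        fix n
        have sk: "summable (\<lambda>k. \<bar>F n (k + Suc l)\<bar>)" using sF1[of n] by (subst summable_iff_shift)
        have "(\<Sum>k. \<bar>F n (k + Suc l)\<bar>) \<le> (\<Sum>l. \<bar>F n l\<bar>)"
          using suminf_split_initial_segment[OF sF1[of n], of "Suc l"] by (simp add: sum_nonneg)
        moreover have "(\<Sum>k. \<bar>F n (k + Suc l)\<bar>) \<ge> 0" by (intro suminf_nonneg sk) auto
        ultimately show "norm (\<Sum>k. \<bar>F n (k + Suc l)\<bar>) \<le> (\<Sum>l. \<bar>F n l\<bar>)" by simp
      qed
    qed
  qed
  have H2: "H\<^sup>2 \<le> 2 * t1\<^sup>2 + 2 * t2\<^sup>2"
  proof -
    have "H\<^sup>2 \<le> (t1 + t2)\<^sup>2" using Hb by (metis abs_ge_zero power2_abs power_mono)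
    then show ?thesis using sq_add_le[of t1 t2] by linarith
  qed
  have X2: "X\<^sup>2 \<le> 2 * (\<Sum>i'<i. (real i' + 1)^2 * (Sm {nu i'<..nu (Suc i')} {n<..nu (Suc l)} x)\<^sup>2)"
    unfolding X_def by (rule WCS)
  have Y2: "Y\<^sup>2 \<le> 2 * (\<Sum>l'<l. (real l' + 1)^2 * (Sm {m<..nu (Suc i)} {nu l'<..nu (Suc l')} x)\<^sup>2)"
    unfolding Y_def by (rule WCS)
  have A1: "(Sm {1..m} {1..n} x - gx)\<^sup>2 \<le> 2 * H\<^sup>2 + 2 * (X + Y + Z)\<^sup>2"
    unfolding dec by (rule sq_diff_le)
  have A2: "(X + Y + Z)\<^sup>2 \<le> 3 * (X\<^sup>2 + Y\<^sup>2 + Z\<^sup>2)" by (rule three_sq)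
  show ?thesis using comb[OF A1 A2 H2 X2 Y2] unfolding i_def[symmetric] l_def[symmetric] Z_def t1_def[symmetric] t2_def[symmetric]
    .
qed

lemma DM:
  fixes x :: 'a and gx :: real and MXv MYv MZv :: "nat \<Rightarrow> nat \<Rightarrow> real"
  defines "F \<equiv> \<lambda>i l. Sm {nu i<..nu (Suc i)} {nu l<..nu (Suc l)} x"
  assumes sF1: "\<And>i. summable (\<lambda>l. \<bar>F i l\<bar>)" and sF2: "summable (\<lambda>i. \<Sum>l. \<bar>F i l\<bar>)"
    and G: "gx = (\<Sum>i. \<Sum>l. F i l)"
    and MX0: "\<And>i l. MXv i l \<ge> 0" and MY0: "\<And>i l. MYv i l \<ge> 0" and MZ0: "\<And>i l. MZv i l \<ge> 0"
    and Xb: "\<And>i l Q. (\<Sum>n\<in>{nu l<..nu (Suc l)} \<inter> {..Q}. (Sm {nu i<..nu (Suc i)} {n<..nu (Suc l)} x)\<^sup>2)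
               \<le> min (real Q) (real (nu (Suc l))) * MXv i l"
    and Yb: "\<And>i l P. (\<Sum>m\<in>{nu i<..nu (Suc i)} \<inter> {..P}. (Sm {m<..nu (Suc i)} {nu l<..nu (Suc l)} x)\<^sup>2)
               \<le> min (real P) (real (nu (Suc i))) * MYv i l"
    and Zb: "\<And>i l P Q. (\<Sum>m\<in>{nu i<..nu (Suc i)} \<inter> {..P}. \<Sum>n\<in>{nu l<..nu (Suc l)} \<inter> {..Q}.
               (F i l - Sm {nu i<..m} {nu l<..n} x)\<^sup>2) \<le> real P * min (real Q) (real (nu (Suc l))) * MZv i l"
    and sX1: "\<And>l. summable (\<lambda>i. (real i+1)^2 * MXv i l)" and sX2: "summable (\<lambda>l. \<Sum>i. (real i+1)^2 * MXv i l)"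
    and sY1: "\<And>i. summable (\<lambda>l. (real l+1)^2 * MYv i l)" and sY2: "summable (\<lambda>i. \<Sum>l. (real l+1)^2 * MYv i l)"
    and sZ1: "\<And>l. summable (\<lambda>i. MZv i l)" and sZ2: "summable (\<lambda>l. \<Sum>i. MZv i l)"
  shows "((\<lambda>(P, Q). (1 / (real P * real Q)) * (\<Sum>m=1..P. \<Sum>n=1..Q. \<bar>Sm {1..m} {1..n} x - gx\<bar>\<^sup>2))
            \<longlongrightarrow> 0) (sequentially \<times>\<^sub>F sequentially)"
proof -
  define tau1 where "tau1 a = (\<Sum>k. \<Sum>l. \<bar>F (k + a) l\<bar>)" for a
  define tau2 where "tau2 b = (\<Sum>i. \<Sum>k. \<bar>F i (k + b)\<bar>)" for b
  define bX where "bX l = (\<Sum>i. (real i+1)^2 * MXv i l)" for l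
  define bY where "bY i = (\<Sum>l. (real l+1)^2 * MYv i l)" for i
  define bZ where "bZ l = (\<Sum>i. MZv i l)" for l
  define Phi1 where "Phi1 P = 12 * (\<Sum>i. om i P * bY i) + 4 * ((1 / real P) * (\<Sum>m\<in>{1..P}. (tau1 (Suc (beta m)))\<^sup>2))" for P
  define Phi2 where "Phi2 Q = 12 * (\<Sum>l. om l Q * bX l) + 6 * (\<Sum>l. om l Q * bZ l)
     + 4 * ((1 / real Q) * (\<Sum>n\<in>{1..Q}. (tau2 (Suc (beta n)))\<^sup>2))" for Q
  have bX0: "bX l \<ge> 0" for l unfolding bX_def using MX0 by (intro suminf_nonneg sX1) auto
  have bY0: "bY i \<ge> 0" for i unfolding bY_def using MY0 by (intro suminf_nonneg sY1) auto
  have bZ0: "bZ l \<ge> 0" for l unfolding bZ_def using MZ0 by (intro suminf_nonneg sZ1) auto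
  have som: "summable (\<lambda>l. om l Q * b l)" if "summable b" "\<And>l. b l \<ge> 0" for b :: "nat \<Rightarrow> real" and Q
    by (rule summable_comparison_test[OF _ that(1)]) (use om_nonneg om_le1 that(2) in \<open>auto intro!: mult_left_le_one_le\<close>)
  have t1lim: "(tau1 \<longlongrightarrow> 0) sequentially"
    unfolding tau1_def by (rule tail_lim[OF sF2])
  have t2lim: "(tau2 \<longlongrightarrow> 0) sequentially"
    unfolding tau2_def by (rule tail2_lim[OF sF1 sF2])
  have Phi1lim: "(Phi1 \<longlongrightarrow> 0) sequentially"
  proof -
    have a: "((\<lambda>P. \<Sum>i. om i P * bY i) \<longlongrightarrow> 0) sequentially"
      by (rule TS[OF bY0 sY2[folded bY_def]])
    have u: "((\<lambda>m. (tau1 (Suc (beta m)))\<^sup>2) \<longlongrightarrow> 0) sequentially"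
      using tendsto_power[OF filterlim_compose[OF t1lim Suc_beta_at_top], of 2] by simp
    have b: "((\<lambda>P. (1 / real P) * (\<Sum>m\<in>{1..P}. (tau1 (Suc (beta m)))\<^sup>2)) \<longlongrightarrow> 0) sequentially"
      by (rule CS[OF _ u]) simp
    show ?thesis unfolding Phi1_def[abs_def] using tendsto_add[OF tendsto_mult_right_zero[OF a] tendsto_mult_right_zero[OF b]]
      by simp
  qed
  have Phi2lim: "(Phi2 \<longlongrightarrow> 0) sequentially"
  proof -
    have a: "((\<lambda>Q. \<Sum>l. om l Q * bX l) \<longlongrightarrow> 0) sequentially"
      by (rule TS[OF bX0 sX2[folded bX_def]])
    have a2: "((\<lambda>Q. \<Sum>l. om l Q * bZ l) \<longlongrightarrow> 0) sequentially"
      by (rule TS[OF bZ0 sZ2[folded bZ_def]])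
    have u: "((\<lambda>m. (tau2 (Suc (beta m)))\<^sup>2) \<longlongrightarrow> 0) sequentially"
      using tendsto_power[OF filterlim_compose[OF t2lim Suc_beta_at_top], of 2] by simp
    have b: "((\<lambda>Q. (1 / real Q) * (\<Sum>n\<in>{1..Q}. (tau2 (Suc (beta n)))\<^sup>2)) \<longlongrightarrow> 0) sequentially"
      by (rule CS[OF _ u]) simp
    show ?thesis unfolding Phi2_def[abs_def]
      using tendsto_add[OF tendsto_add[OF tendsto_mult_right_zero[OF a] tendsto_mult_right_zero[OF a2]] tendsto_mult_right_zero[OF b]]
      by simp
  qed
  have main: "(1 / (real P * real Q)) * (\<Sum>m=1..P. \<Sum>n=1..Q. \<bar>Sm {1..m} {1..n} x - gx\<bar>\<^sup>2) \<le> Phi1 P + Phi2 Q"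
    if P1: "P \<ge> 1" and Q1: "Q \<ge> 1" for P Q
  proof -
    define XX where "XX = (\<Sum>m\<in>{1..P}. \<Sum>n\<in>{1..Q}. \<Sum>i<beta m. (real i + 1)^2 * (Sm {nu i<..nu (Suc i)} {n<..nu (Suc (beta n))} x)\<^sup>2)"
    define YY where "YY = (\<Sum>m\<in>{1..P}. \<Sum>n\<in>{1..Q}. \<Sum>l<beta n. (real l + 1)^2 * (Sm {m<..nu (Suc (beta m))} {nu l<..nu (Suc l)} x)\<^sup>2)"
    define ZZ where "ZZ = (\<Sum>m\<in>{1..P}. \<Sum>n\<in>{1..Q}. (F (beta m) (beta n) - Sm {nu (beta m)<..m} {nu (beta n)<..n} x)\<^sup>2)"
    define HH where "HH = (\<Sum>m\<in>{1..P}. \<Sum>n\<in>{1..Q}. 4 * (tau1 (Suc (beta m)))\<^sup>2 + 4 * (tau2 (Suc (beta n)))\<^sup>2)"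
    have S: "(\<Sum>m=1..P. \<Sum>n=1..Q. \<bar>Sm {1..m} {1..n} x - gx\<bar>\<^sup>2) \<le> 12 * XX + 12 * YY + 6 * ZZ + HH"
    proof -
      have "(\<Sum>m=1..P. \<Sum>n=1..Q. \<bar>Sm {1..m} {1..n} x - gx\<bar>\<^sup>2)
        \<le> (\<Sum>m\<in>{1..P}. \<Sum>n\<in>{1..Q}.
           12 * (\<Sum>i<beta m. (real i + 1)^2 * (Sm {nu i<..nu (Suc i)} {n<..nu (Suc (beta n))} x)\<^sup>2)
         + 12 * (\<Sum>l<beta n. (real l + 1)^2 * (Sm {m<..nu (Suc (beta m))} {nu l<..nu (Suc l)} x)\<^sup>2)
         + 6 * (F (beta m) (beta n) - Sm {nu (beta m)<..m} {nu (beta n)<..n} x)\<^sup>2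
         + (4 * (tau1 (Suc (beta m)))\<^sup>2 + 4 * (tau2 (Suc (beta n)))\<^sup>2))"
      proof (intro sum_mono)
        fix m n assume "m \<in> {1..P}" "n \<in> {1..Q}"
        then show "\<bar>Sm {1..m} {1..n} x - gx\<bar>\<^sup>2 \<le> 12 * (\<Sum>i<beta m. (real i + 1)^2 * (Sm {nu i<..nu (Suc i)} {n<..nu (Suc (beta n))} x)\<^sup>2)
         + 12 * (\<Sum>l<beta n. (real l + 1)^2 * (Sm {m<..nu (Suc (beta m))} {nu l<..nu (Suc l)} x)\<^sup>2)
         + 6 * (F (beta m) (beta n) - Sm {nu (beta m)<..m} {nu (beta n)<..n} x)\<^sup>2
         + (4 * (tau1 (Suc (beta m)))\<^sup>2 + 4 * (tau2 (Suc (beta n)))\<^sup>2)"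
          using PT[OF sF1[unfolded F_def] sF2[unfolded F_def] G[unfolded F_def], of m n] unfolding tau1_def tau2_def F_def
          by simp
      qed
      also have "\<dots> = 12 * XX + 12 * YY + 6 * ZZ + HH"
        unfolding XX_def YY_def ZZ_def HH_def by (simp add: sum.distrib sum_distrib_left)
      finally show ?thesis .
    qed
    have XXb: "XX \<le> real P * real Q * (\<Sum>l. om l Q * bX l)"
    proof -
      have "XX \<le> real P * real Q * (\<Sum>l<Suc (beta Q). om l Q * bX l)"
        unfolding XX_def bX_def
        by (rule XS[where V="\<lambda>i l n. (Sm {nu i<..nu (Suc i)} {n<..nu (Suc l)} x)\<^sup>2" and Mb=MXv, OF _ MX0 Xb sX1 Q1]) simp
      also have "\<dots> \<le> real P * real Q * (\<Sum>l. om l Q * bX l)"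
        by (intro mult_left_mono sum_le_suminf som sX2[folded bX_def] bX0) (auto intro!: mult_nonneg_nonneg om_nonneg bX0)
      finally show ?thesis .
    qed
    have YYb: "YY \<le> real P * real Q * (\<Sum>i. om i P * bY i)"
    proof -
      have "YY = (\<Sum>n\<in>{1..Q}. \<Sum>m\<in>{1..P}. \<Sum>l<beta n. (real l + 1)^2 * (Sm {m<..nu (Suc (beta m))} {nu l<..nu (Suc l)} x)\<^sup>2)"
        unfolding YY_def by (rule sum.swap)
      also have "\<dots> \<le> real Q * real P * (\<Sum>i<Suc (beta P). om i P * bY i)"
        unfolding bY_def
        by (rule XS[where V="\<lambda>l i m. (Sm {m<..nu (Suc i)} {nu l<..nu (Suc l)} x)\<^sup>2" and Mb="\<lambda>l i. MYv i l", OF _ MY0 Yb sY1 P1]) simp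
      also have "\<dots> \<le> real Q * real P * (\<Sum>i. om i P * bY i)"
        by (intro mult_left_mono sum_le_suminf som sY2[folded bY_def] bY0) (auto intro!: mult_nonneg_nonneg om_nonneg bY0)
      finally show ?thesis by (simp add: mult.commute)
    qed
    have ZZb: "ZZ \<le> real P * real Q * (\<Sum>l. om l Q * bZ l)"
    proof -
      have "ZZ \<le> real P * real Q * (\<Sum>l<Suc (beta Q). om l Q * bZ l)"
        unfolding ZZ_def bZ_def
        by (rule ZS[where W="\<lambda>i l m n. (F i l - Sm {nu i<..m} {nu l<..n} x)\<^sup>2" and Mz=MZv, OF _ MZ0 Zb sZ1 Q1]) simp
      also have "\<dots> \<le> real P * real Q * (\<Sum>l. om l Q * bZ l)"
        by (intro mult_left_mono sum_le_suminf som sZ2[folded bZ_def] bZ0) (auto intro!: mult_nonneg_nonneg om_nonneg bZ0)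
      finally show ?thesis .
    qed
    have HHe: "HH = 4 * real Q * (\<Sum>m\<in>{1..P}. (tau1 (Suc (beta m)))\<^sup>2) + 4 * real P * (\<Sum>n\<in>{1..Q}. (tau2 (Suc (beta n)))\<^sup>2)"
      unfolding HH_def by (simp add: sum.distrib sum_distrib_left sum.swap[of _ "{1..P}"] mult_ac)
    have PQ: "real P * real Q > 0" using P1 Q1 by simp
    have "(1 / (real P * real Q)) * (\<Sum>m=1..P. \<Sum>n=1..Q. \<bar>Sm {1..m} {1..n} x - gx\<bar>\<^sup>2)
        \<le> (1 / (real P * real Q)) * (12 * (real P * real Q * (\<Sum>l. om l Q * bX l))
            + 12 * (real P * real Q * (\<Sum>i. om i P * bY i)) + 6 * (real P * real Q * (\<Sum>l. om l Q * bZ l)) + HH)"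
      using S XXb YYb ZZb PQ by (intro mult_left_mono) auto
    also have "\<dots> = Phi1 P + Phi2 Q"
    proof -
      have P0: "real P \<noteq> 0" and Q0: "real Q \<noteq> 0" using P1 Q1 by auto
      show ?thesis unfolding Phi1_def Phi2_def HHe using P0 Q0 by (simp add: field_simps)
    qed
    finally show ?thesis .
  qed
  have lim: "((\<lambda>(P, Q). Phi1 P + Phi2 Q) \<longlongrightarrow> 0) (sequentially \<times>\<^sub>F sequentially)"
  proof -
    have "((\<lambda>p. Phi1 (fst p) + Phi2 (snd p)) \<longlongrightarrow> 0 + 0) (sequentially \<times>\<^sub>F sequentially)"
      by (intro tendsto_add filterlim_compose[OF Phi1lim filterlim_fst] filterlim_compose[OF Phi2lim filterlim_snd])
    then show ?thesis by (simp add: case_prod_beta')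
  qed
  show ?thesis
  proof (rule tendsto_sandwich[OF _ _ tendsto_const lim])
    show "\<forall>\<^sub>F p in sequentially \<times>\<^sub>F sequentially. 0 \<le> (case p of (P, Q) \<Rightarrow> 1 / (real P * real Q) * (\<Sum>m = 1..P. \<Sum>n = 1..Q. \<bar>Sm {1..m} {1..n} x - gx\<bar>\<^sup>2))"
      by (intro always_eventually) (auto intro!: divide_nonneg_nonneg sum_nonneg)
    show "\<forall>\<^sub>F p in sequentially \<times>\<^sub>F sequentially. (case p of (P, Q) \<Rightarrow> 1 / (real P * real Q) * (\<Sum>m = 1..P. \<Sum>n = 1..Q. \<bar>Sm {1..m} {1..n} x - gx\<bar>\<^sup>2))
        \<le> (case p of (P, Q) \<Rightarrow> Phi1 P + Phi2 Q)"
      unfolding eventually_prod_sequentially using main by auto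
  qed
qed

end


context dbl begin

lemma dbl_T: "dbl M (\<lambda>j k. \<psi> k j)"
  unfolding dbl_def orthonormal_system2_def
proof (intro conjI fin allI impI)
  have o: "orthonormal_system2 M \<psi>" by (rule ons)
  fix j k :: nat assume "1 \<le> j" "1 \<le> k"
  then show "(\<lambda>x. \<psi> k j x) \<in> borel_measurable M" "integrable M (\<lambda>x. (\<psi> k j x)\<^sup>2)"
    using psi_meas psi_sq_int by auto
next
  fix j k j' k' :: nat assume "1 \<le> j" "1 \<le> k" "1 \<le> j'" "1 \<le> k'"
  then show "(\<integral>x. \<psi> k j x * \<psi> k' j' x \<partial>M) = (if j = j' \<and> k = k' then 1 else 0)"
    using psi_orth[of k j k' j'] by auto
qed

lemma Sm_T: "dbl.Sm (\<lambda>j k. \<psi> k j) (\<lambda>j k. c k j) A B x = Sm B A x"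
  unfolding dbl.Sm_def[OF dbl_T] Sm_def by (rule sum.swap)

lemma gam_T: "dbl.gam (\<lambda>j k. c k j) A B = gam B A"
  unfolding dbl.gam_def[OF dbl_T] gam_def by (rule sum.swap)

definition FF :: "nat \<Rightarrow> nat \<Rightarrow> 'a \<Rightarrow> real" where
  "FF i l x = Sm {nu i<..nu (Suc i)} {nu l<..nu (Suc l)} x"
definition MXv :: "nat \<Rightarrow> nat \<Rightarrow> 'a \<Rightarrow> real" where
  "MXv i l x = MX {nu i<..nu (Suc i)} (eg l) l x"
definition MYv :: "nat \<Rightarrow> nat \<Rightarrow> 'a \<Rightarrow> real" where
  "MYv i l x = dbl.MX (\<lambda>j k. \<psi> k j) (\<lambda>j k. c k j) {nu l<..nu (Suc l)} (eg i) i x"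
definition MZv :: "nat \<Rightarrow> nat \<Rightarrow> 'a \<Rightarrow> real" where
  "MZv i l x = MZ (eg i) i (eg l) l x"

lemma MXv0: "MXv i l x \<ge> 0" unfolding MXv_def by (rule MX_nonneg)
lemma MYv0: "MYv i l x \<ge> 0" unfolding MYv_def by (rule dbl.MX_nonneg[OF dbl_T])
lemma MZv0: "MZv i l x \<ge> 0" unfolding MZv_def by (rule MZ_nonneg)

lemma minify:
  fixes f :: "nat \<Rightarrow> real" and N :: nat
  assumes le: "\<And>Q. f Q \<le> real Q * Mv" and st: "\<And>Q. Q \<ge> N \<Longrightarrow> f Q = f N" and M0: "Mv \<ge> 0"
  shows "f Q \<le> min (real Q) (real N) * Mv"
proof (cases "Q \<le> N")
  case True then show ?thesis using le[of Q] by (simp add: min_def)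
next
  case False then show ?thesis using le[of N] st[of Q] by (simp add: min_def)
qed

lemma blk_cap: "Q \<ge> nu (Suc l) \<Longrightarrow> {nu l<..nu (Suc l)} \<inter> {..Q} = {nu l<..nu (Suc l)}"
  by auto

lemma Xb: "(\<Sum>n\<in>{nu l<..nu (Suc l)} \<inter> {..Q}. (Sm {nu i<..nu (Suc i)} {n<..nu (Suc l)} x)\<^sup>2)
               \<le> min (real Q) (real (nu (Suc l))) * MXv i l x"
proof (rule minify[where f="\<lambda>Q. \<Sum>n\<in>{nu l<..nu (Suc l)} \<inter> {..Q}. (Sm {nu i<..nu (Suc i)} {n<..nu (Suc l)} x)\<^sup>2"])
  show "(\<Sum>n\<in>{nu l<..nu (Suc l)} \<inter> {..Q}. (Sm {nu i<..nu (Suc i)} {n<..nu (Suc l)} x)\<^sup>2) \<le> real Q * MXv i l x" for Q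
    using MX_point[OF eg_spaced, where Q=Q and A="{nu i<..nu (Suc i)}" and x=x] unfolding MXv_def eg0 egtop .
qed (auto simp: blk_cap MXv0)

lemma Yb: "(\<Sum>m\<in>{nu i<..nu (Suc i)} \<inter> {..P}. (Sm {m<..nu (Suc i)} {nu l<..nu (Suc l)} x)\<^sup>2)
               \<le> min (real P) (real (nu (Suc i))) * MYv i l x"
proof (rule minify[where f="\<lambda>P. \<Sum>m\<in>{nu i<..nu (Suc i)} \<inter> {..P}. (Sm {m<..nu (Suc i)} {nu l<..nu (Suc l)} x)\<^sup>2"])
  show "(\<Sum>m\<in>{nu i<..nu (Suc i)} \<inter> {..P}. (Sm {m<..nu (Suc i)} {nu l<..nu (Suc l)} x)\<^sup>2) \<le> real P * MYv i l x" for P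
    using dbl.MX_point[OF dbl_T dbl.eg_spaced[OF dbl_T, of i], where Q=P and A="{nu l<..nu (Suc l)}" and x=x and c="\<lambda>j k. c k j"]
    unfolding MYv_def eg0 egtop Sm_T .
qed (auto simp: blk_cap MYv0)

lemma Zb: "(\<Sum>m\<in>{nu i<..nu (Suc i)} \<inter> {..P}. \<Sum>n\<in>{nu l<..nu (Suc l)} \<inter> {..Q}.
               (FF i l x - Sm {nu i<..m} {nu l<..n} x)\<^sup>2) \<le> real P * min (real Q) (real (nu (Suc l))) * MZv i l x"
proof -
  have "(\<Sum>m\<in>{nu i<..nu (Suc i)} \<inter> {..P}. \<Sum>n\<in>{nu l<..nu (Suc l)} \<inter> {..Q}.
               (FF i l x - Sm {nu i<..m} {nu l<..n} x)\<^sup>2) \<le> min (real Q) (real (nu (Suc l))) * (real P * MZv i l x)"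
  proof (rule minify[where f="\<lambda>Q. \<Sum>m\<in>{nu i<..nu (Suc i)} \<inter> {..P}. \<Sum>n\<in>{nu l<..nu (Suc l)} \<inter> {..Q}.
               (FF i l x - Sm {nu i<..m} {nu l<..n} x)\<^sup>2"])
    show "(\<Sum>m\<in>{nu i<..nu (Suc i)} \<inter> {..P}. \<Sum>n\<in>{nu l<..nu (Suc l)} \<inter> {..Q}.
               (FF i l x - Sm {nu i<..m} {nu l<..n} x)\<^sup>2) \<le> real Q * (real P * MZv i l x)" for Q
    proof -
      have "(\<Sum>m\<in>{nu i<..nu (Suc i)} \<inter> {..P}. \<Sum>n\<in>{nu l<..nu (Suc l)} \<inter> {..Q}.
               (FF i l x - Sm {nu i<..m} {nu l<..n} x)\<^sup>2) \<le> real P * real Q * MZv i l x"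
        using MZ_point[OF eg_spaced eg_spaced, where P=P and Q=Q and x=x] unfolding MZv_def eg0 egtop FF_def
        by (simp only: of_nat_mult)
      also have "real P * real Q * MZv i l x = real Q * (real P * MZv i l x)" by simp
      finally show ?thesis .
    qed
  qed (auto simp: blk_cap MZv0)
  also have "min (real Q) (real (nu (Suc l))) * (real P * MZv i l x) = real P * min (real Q) (real (nu (Suc l))) * MZv i l x"
    by simp
  finally show ?thesis .
qed

end


lemma abs_le_om: fixes w y :: real assumes "w > 0" shows "\<bar>y\<bar> \<le> (1 / w + w * y\<^sup>2) / 2"
proof -
  have "0 \<le> (1 - w * \<bar>y\<bar>)\<^sup>2 / w" using assms by simp
  also have "(1 - w * \<bar>y\<bar>)\<^sup>2 / w = 1 / w - 2 * \<bar>y\<bar> + w * y\<^sup>2"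
    using assms by (simp add: power2_eq_square field_simps)
  finally show ?thesis by simp
qed

lemma dsum_mono:
  fixes a b :: "nat \<Rightarrow> nat \<Rightarrow> real"
  assumes "\<And>i l. 0 \<le> a i l" "\<And>i l. a i l \<le> b i l"
  shows "(\<Sum>i. \<Sum>l. ennreal (a i l)) \<le> (\<Sum>i. \<Sum>l. ennreal (b i l))"
  using assms by (intro suminf_le summableI ennreal_leI) auto

lemma inv_om_sum: "(\<Sum>i<I. \<Sum>l<L. 1 / ((real i+1)^2 * (real l+1)^2)) \<le> 4"
proof -
  have "(\<Sum>i<I. \<Sum>l<L. 1 / ((real i+1)^2 * (real l+1)^2)) = (\<Sum>i<I. 1 / (real i+1)^2) * (\<Sum>l<L. 1 / (real l+1)^2)"
    by (simp add: sum_product)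
  also have "\<dots> \<le> 2 * 2" by (intro mult_mono inv_sq_sum) (auto intro: sum_nonneg)
  finally show ?thesis by simp
qed

context dbl begin

definition tau :: "nat \<Rightarrow> nat \<Rightarrow> 'a \<Rightarrow> real" where
  "tau i l x = \<bar>FF i l x\<bar> + (real i+1)^2 * MXv i l x + (real l+1)^2 * MYv i l x + MZv i l x"

lemma tau0: "tau i l x \<ge> 0"
  unfolding tau_def using MXv0 MYv0 MZv0 by (intro add_nonneg_nonneg mult_nonneg_nonneg) auto

lemma gam_blk: "gam {nu i<..nu (Suc i)} {nu l<..nu (Suc l)} = (\<Sum>j\<in>{nu i<..nu (Suc i)}. \<Sum>k\<in>{nu l<..nu (Suc l)}. (c j k)\<^sup>2)"
  unfolding gam_def ..

lemma tau_int:
  shows "integrable M (tau i l)"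
    "(\<integral>x. tau i l x \<partial>M) \<le> measure M (space M) / ((real i+1)^2 * (real l+1)^2)
        + 163 * ((real i+1)^2 * (real l+1)^2 * gam {nu i<..nu (Suc i)} {nu l<..nu (Suc l)})"
proof -
  interpret finite_measure M by (rule fin)
  define w where "w = (real i+1)^2 * (real l+1)^2"
  define \<gamma> where "\<gamma> = gam {nu i<..nu (Suc i)} {nu l<..nu (Suc l)}"
  have w0: "w > 0" unfolding w_def by simp
  have g0: "\<gamma> \<ge> 0" unfolding \<gamma>_def by (rule gam_nonneg)
  have iF2: "integrable M (\<lambda>x. (FF i l x)\<^sup>2)" and IF2: "(\<integral>x. (FF i l x)\<^sup>2 \<partial>M) = \<gamma>"
    unfolding FF_def \<gamma>_def by simp_all
  have mF: "FF i l \<in> borel_measurable M" unfolding FF_def[abs_def] by (intro Sm_meas) auto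
  have iB: "integrable M (\<lambda>x. (1 / w + w * (FF i l x)\<^sup>2) / 2)"
    using iF2 by (intro integrable_divide Bochner_Integration.integrable_add integrable_mult_right) auto
  have iA: "integrable M (\<lambda>x. \<bar>FF i l x\<bar>)"
  proof (rule Bochner_Integration.integrable_bound[OF iB])
    show "(\<lambda>x. \<bar>FF i l x\<bar>) \<in> borel_measurable M" using mF by measurable
    show "AE x in M. norm \<bar>FF i l x\<bar> \<le> norm ((1 / w + w * (FF i l x)\<^sup>2) / 2)"
      using abs_le_om[OF w0] w0 by (intro AE_I2) (auto simp: abs_of_nonneg)
  qed
  have IA: "(\<integral>x. \<bar>FF i l x\<bar> \<partial>M) \<le> measure M (space M) / (2 * w) + w * \<gamma> / 2"
  proof -
    have "(\<integral>x. \<bar>FF i l x\<bar> \<partial>M) \<le> (\<integral>x. (1 / w + w * (FF i l x)\<^sup>2) / 2 \<partial>M)"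
      by (intro integral_mono iA iB abs_le_om w0)
    also have "\<dots> = measure M (space M) / (2 * w) + w * \<gamma> / 2"
      using iF2 IF2 by (simp add: Bochner_Integration.integral_add field_simps)
    finally show ?thesis .
  qed
  have iX: "integrable M (MXv i l)" and IX: "(\<integral>x. MXv i l x \<partial>M) \<le> 16 * (real l+1)^2 * \<gamma>"
    using MX_int[OF _ _ eg_spaced, of "{nu i<..nu (Suc i)}" l] unfolding MXv_def[abs_def] \<gamma>_def eg0 egtop
    by (auto simp: add.commute)
  have iY: "integrable M (MYv i l)" and IY: "(\<integral>x. MYv i l x \<partial>M) \<le> 16 * (real i+1)^2 * \<gamma>"
    using dbl.MX_int[OF dbl_T _ _ dbl.eg_spaced[OF dbl_T, of i], of "{nu l<..nu (Suc l)}" "\<lambda>j k. c k j"]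
    unfolding MYv_def[abs_def] \<gamma>_def eg0 egtop gam_T by (auto simp: add.commute)
  have iZ: "integrable M (MZv i l)" and IZ: "(\<integral>x. MZv i l x \<partial>M) \<le> 130 * ((real i+1)^2 * (real l+1)^2) * \<gamma>"
    using MZ_int[OF eg_spaced eg_spaced, of i l] unfolding MZv_def[abs_def] \<gamma>_def eg0 egtop by (auto simp: add.commute)
  show "integrable M (tau i l)"
    unfolding tau_def[abs_def] using iA iX iY iZ
    by (intro Bochner_Integration.integrable_add integrable_mult_right) auto
  have "(\<integral>x. tau i l x \<partial>M) = (\<integral>x. \<bar>FF i l x\<bar> \<partial>M) + (real i+1)^2 * (\<integral>x. MXv i l x \<partial>M)
      + (real l+1)^2 * (\<integral>x. MYv i l x \<partial>M) + (\<integral>x. MZv i l x \<partial>M)"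
    unfolding tau_def using iA iX iY iZ
    by (simp add: Bochner_Integration.integral_add Bochner_Integration.integrable_add)
  also have "\<dots> \<le> (measure M (space M) / (2 * w) + w * \<gamma> / 2) + (real i+1)^2 * (16 * (real l+1)^2 * \<gamma>)
      + (real l+1)^2 * (16 * (real i+1)^2 * \<gamma>) + 130 * ((real i+1)^2 * (real l+1)^2) * \<gamma>"
    by (intro add_mono IA IX IY IZ mult_left_mono) auto
  also have "\<dots> = measure M (space M) / (2 * w) + (1/2 + 162) * (w * \<gamma>)"
    unfolding w_def by (simp add: algebra_simps)
  also have "\<dots> \<le> measure M (space M) / w + 163 * (w * \<gamma>)"
  proof -
    have m0: "measure M (space M) \<ge> 0" by simp
    have "measure M (space M) / (2 * w) \<le> measure M (space M) / w"
      using w0 m0 by (simp add: frac_le)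
    moreover have "(1/2 + 162) * (w * \<gamma>) \<le> 163 * (w * \<gamma>)"
      using w0 g0 by (intro mult_right_mono) auto
    ultimately show ?thesis by linarith
  qed
  finally show "(\<integral>x. tau i l x \<partial>M) \<le> measure M (space M) / ((real i+1)^2 * (real l+1)^2)
        + 163 * ((real i+1)^2 * (real l+1)^2 * gam {nu i<..nu (Suc i)} {nu l<..nu (Suc l)})"
    unfolding w_def \<gamma>_def .
qed

lemma nn_dsum:
  fixes f :: "nat \<Rightarrow> nat \<Rightarrow> 'a \<Rightarrow> real"
  assumes m: "\<And>i l. f i l \<in> borel_measurable M"
  shows "(\<integral>\<^sup>+x. (\<Sum>i. \<Sum>l. ennreal (f i l x)) \<partial>M) = (\<Sum>i. \<Sum>l. \<integral>\<^sup>+x. ennreal (f i l x) \<partial>M)"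
proof -
  have m2: "(\<lambda>x. \<Sum>l. ennreal (f i l x)) \<in> borel_measurable M" for i
    using m by measurable
  have "(\<integral>\<^sup>+x. (\<Sum>i. \<Sum>l. ennreal (f i l x)) \<partial>M) = (\<Sum>i. \<integral>\<^sup>+x. (\<Sum>l. ennreal (f i l x)) \<partial>M)"
    by (rule nn_integral_suminf[OF m2])
  also have "\<dots> = (\<Sum>i. \<Sum>l. \<integral>\<^sup>+x. ennreal (f i l x) \<partial>M)"
    using m by (intro suminf_cong nn_integral_suminf) measurable
  finally show ?thesis .
qed

lemma AE_fin:
  assumes coef: "(\<lambda>(j, k). (c j k)\<^sup>2 * (log 2 (log 2 (real j + 3)))\<^sup>2 * (log 2 (log 2 (real k + 3)))\<^sup>2)
                 summable_on ({1..} \<times> {1..})"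
  shows "AE x in M. (\<Sum>i. \<Sum>l. ennreal (tau i l x)) \<noteq> top \<and> (\<Sum>l. \<Sum>i. ennreal (tau i l x)) \<noteq> top"
proof -
  define K0 where "K0 = infsum (\<lambda>(j, k). (c j k)\<^sup>2 * (log 2 (log 2 (real j + 3)))\<^sup>2 * (log 2 (log 2 (real k + 3)))\<^sup>2) ({1..} \<times> {1..})"
  define K where "K = 4 * measure M (space M) + 163 * (16 * K0)"
  have mt: "tau i l \<in> borel_measurable M" for i l using tau_int(1) by (rule borel_measurable_integrable)
  have rect: "(\<Sum>i<I. \<Sum>l<L. (\<integral>x. tau i l x \<partial>M)) \<le> K" for I L
  proof -
    have "(\<Sum>i<I. \<Sum>l<L. (\<integral>x. tau i l x \<partial>M)) \<le> (\<Sum>i<I. \<Sum>l<L. measure M (space M) / ((real i+1)^2 * (real l+1)^2)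
        + 163 * ((real i+1)^2 * (real l+1)^2 * gam {nu i<..nu (Suc i)} {nu l<..nu (Suc l)}))"
      by (intro sum_mono tau_int)
    also have "\<dots> = measure M (space M) * (\<Sum>i<I. \<Sum>l<L. 1 / ((real i+1)^2 * (real l+1)^2))
       + 163 * (\<Sum>i<I. \<Sum>l<L. (real i+1)^2 * (real l+1)^2 * gam {nu i<..nu (Suc i)} {nu l<..nu (Suc l)})"
      by (simp add: sum.distrib sum_distrib_left)
    also have "\<dots> \<le> measure M (space M) * 4 + 163 * (16 * K0)"
    proof (intro add_mono mult_left_mono inv_om_sum)
      show "(\<Sum>i<I. \<Sum>l<L. (real i+1)^2 * (real l+1)^2 * gam {nu i<..nu (Suc i)} {nu l<..nu (Suc l)}) \<le> 16 * K0"
        unfolding gam_blk K0_def by (rule K0_bound[OF coef])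
    qed auto
    finally show ?thesis unfolding K_def by simp
  qed
  have i1: "(\<integral>\<^sup>+x. (\<Sum>i. \<Sum>l. ennreal (tau i l x)) \<partial>M) \<le> ennreal K"
  proof -
    have "(\<integral>\<^sup>+x. (\<Sum>i. \<Sum>l. ennreal (tau i l x)) \<partial>M) = (\<Sum>i. \<Sum>l. ennreal (\<integral>x. tau i l x \<partial>M))"
      unfolding nn_dsum[OF mt] using tau_int(1) tau0 by (simp add: nn_integral_eq_integral)
    also have "\<dots> \<le> ennreal K"
    proof (rule ennreal_dsum_le)
      show "(\<Sum>i<I. \<Sum>l<L. (\<integral>x. tau i l x \<partial>M)) \<le> K" for I L by (rule rect)
    qed (use tau0 in \<open>auto intro: Bochner_Integration.integral_nonneg\<close>)
    finally show ?thesis .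
  qed
  have i2: "(\<integral>\<^sup>+x. (\<Sum>l. \<Sum>i. ennreal (tau i l x)) \<partial>M) \<le> ennreal K"
  proof -
    have "(\<integral>\<^sup>+x. (\<Sum>l. \<Sum>i. ennreal (tau i l x)) \<partial>M) = (\<Sum>l. \<Sum>i. ennreal (\<integral>x. tau i l x \<partial>M))"
      unfolding nn_dsum[where f="\<lambda>l i. tau i l", OF mt] using tau_int(1) tau0 by (simp add: nn_integral_eq_integral)
    also have "\<dots> \<le> ennreal K"
    proof (rule ennreal_dsum_le)
      show "(\<Sum>l<L. \<Sum>i<I. (\<integral>x. tau i l x \<partial>M)) \<le> K" for L I
        using rect[where I=I and L=L] sum.swap[where g="\<lambda>l i. (\<integral>x. tau i l x \<partial>M)" and A="{..<L}" and B="{..<I}"] by simp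
    qed (use tau0 in \<open>auto intro: Bochner_Integration.integral_nonneg\<close>)
    finally show ?thesis .
  qed
  have m1: "(\<lambda>x. \<Sum>i. \<Sum>l. ennreal (tau i l x)) \<in> borel_measurable M" using mt by measurable
  have m2: "(\<lambda>x. \<Sum>l. \<Sum>i. ennreal (tau i l x)) \<in> borel_measurable M" using mt by measurable
  have f1: "(\<integral>\<^sup>+x. (\<Sum>i. \<Sum>l. ennreal (tau i l x)) \<partial>M) \<noteq> \<infinity>"
    using i1 by (auto simp: top_unique)
  have f2: "(\<integral>\<^sup>+x. (\<Sum>l. \<Sum>i. ennreal (tau i l x)) \<partial>M) \<noteq> \<infinity>"
    using i2 by (auto simp: top_unique)
  have a1: "AE x in M. (\<Sum>i. \<Sum>l. ennreal (tau i l x)) \<noteq> top"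
    using nn_integral_PInf_AE[OF m1 f1] by simp
  have a2: "AE x in M. (\<Sum>l. \<Sum>i. ennreal (tau i l x)) \<noteq> top"
    using nn_integral_PInf_AE[OF m2 f2] by simp
  show ?thesis using a1 a2 by eventually_elim auto
qed

lemma comp_summ:
  fixes a b :: "nat \<Rightarrow> nat \<Rightarrow> real"
  assumes a0: "\<And>i l. 0 \<le> a i l" and ab: "\<And>i l. a i l \<le> b i l" and fin: "(\<Sum>i. \<Sum>l. ennreal (b i l)) \<noteq> top"
  shows "summable (a i)" "summable (\<lambda>i. suminf (a i))"
proof -
  have "(\<Sum>i. \<Sum>l. ennreal (a i l)) \<le> (\<Sum>i. \<Sum>l. ennreal (b i l))" by (rule dsum_mono[OF a0 ab])
  then have "(\<Sum>i. \<Sum>l. ennreal (a i l)) \<noteq> top" using fin by (auto simp: top_unique)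
  then show "summable (a i)" "summable (\<lambda>i. suminf (a i))" using dsum_summable[OF a0] by auto
qed

lemma good_summ:
  assumes T1: "(\<Sum>i. \<Sum>l. ennreal (tau i l x)) \<noteq> top" and T2: "(\<Sum>l. \<Sum>i. ennreal (tau i l x)) \<noteq> top"
  shows "\<And>i. summable (\<lambda>l. \<bar>FF i l x\<bar>)" "summable (\<lambda>i. \<Sum>l. \<bar>FF i l x\<bar>)"
    "\<And>i. summable (\<lambda>l. (real l+1)^2 * MYv i l x)" "summable (\<lambda>i. \<Sum>l. (real l+1)^2 * MYv i l x)"
    "\<And>l. summable (\<lambda>i. (real i+1)^2 * MXv i l x)" "summable (\<lambda>l. \<Sum>i. (real i+1)^2 * MXv i l x)"
    "\<And>l. summable (\<lambda>i. MZv i l x)" "summable (\<lambda>l. \<Sum>i. MZv i l x)"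
proof -
  have t: "tau i l x = \<bar>FF i l x\<bar> + (real i+1)^2 * MXv i l x + (real l+1)^2 * MYv i l x + MZv i l x" for i l
    by (simp add: tau_def)
  have nn: "0 \<le> (real i+1)^2 * MXv i l x" "0 \<le> (real l+1)^2 * MYv i l x" "0 \<le> MZv i l x" for i l
    using MXv0 MYv0 MZv0 by auto
  show "\<And>i. summable (\<lambda>l. \<bar>FF i l x\<bar>)" "summable (\<lambda>i. \<Sum>l. \<bar>FF i l x\<bar>)"
    using comp_summ[where a="\<lambda>i l. \<bar>FF i l x\<bar>" and b="\<lambda>i l. tau i l x", OF _ _ T1] nn t by auto
  show "\<And>i. summable (\<lambda>l. (real l+1)^2 * MYv i l x)" "summable (\<lambda>i. \<Sum>l. (real l+1)^2 * MYv i l x)"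
    using comp_summ[where a="\<lambda>i l. (real l+1)^2 * MYv i l x" and b="\<lambda>i l. tau i l x", OF _ _ T1] nn t by auto
  show "\<And>l. summable (\<lambda>i. (real i+1)^2 * MXv i l x)" "summable (\<lambda>l. \<Sum>i. (real i+1)^2 * MXv i l x)"
    using comp_summ[where a="\<lambda>l i. (real i+1)^2 * MXv i l x" and b="\<lambda>l i. tau i l x", OF _ _ T2] nn t by auto
  show "\<And>l. summable (\<lambda>i. MZv i l x)" "summable (\<lambda>l. \<Sum>i. MZv i l x)"
    using comp_summ[where a="\<lambda>l i. MZv i l x" and b="\<lambda>l i. tau i l x", OF _ _ T2] nn t by auto
qed

end


context dbl begin

lemma rps_Sm: "rect_partial_sum c \<psi> m n x = Sm {1..m} {1..n} x"
  unfolding rect_partial_sum_def Sm_def ..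

lemma one_ioc: "{1..k} = {0<..(k::nat)}" by auto

lemma Gg:
  assumes g_meas: "g \<in> borel_measurable M"
    and g_L2: "integrable M (\<lambda>x. (g x)\<^sup>2)"
    and L2_sum: "((\<lambda>(m, n). \<integral>x. \<bar>rect_partial_sum c \<psi> m n x - g x\<bar>\<^sup>2 \<partial>M) \<longlongrightarrow> 0)
                   (sequentially \<times>\<^sub>F sequentially)"
  shows "AE x in M. \<forall>y. ((\<lambda>a. Sm {0<..nu a} {0<..nu a} x) \<longlongrightarrow> y) sequentially \<longrightarrow> y = g x"
proof -
  interpret finite_measure M by (rule fin)
  define s where "s a x = Sm {0<..nu a} {0<..nu a} x" for a x
  define u where "u a x = ennreal ((s a x - g x)\<^sup>2)" for a x
  have ms: "s a \<in> borel_measurable M" for a unfolding s_def[abs_def] by (intro Sm_meas) auto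
  have mu: "u a \<in> borel_measurable M" for a unfolding u_def[abs_def] using ms g_meas by measurable
  have iu: "integrable M (\<lambda>x. (s a x - g x)\<^sup>2)" for a
  proof (rule Bochner_Integration.integrable_bound[where f="\<lambda>x. 2 * (s a x)\<^sup>2 + 2 * (g x)\<^sup>2"])
    show "integrable M (\<lambda>x. 2 * (s a x)\<^sup>2 + 2 * (g x)\<^sup>2)"
      unfolding s_def using g_L2 by (intro Bochner_Integration.integrable_add integrable_mult_right) auto
    show "(\<lambda>x. (s a x - g x)\<^sup>2) \<in> borel_measurable M" using ms g_meas by measurable
    show "AE x in M. norm ((s a x - g x)\<^sup>2) \<le> norm (2 * (s a x)\<^sup>2 + 2 * (g x)\<^sup>2)"
      using sq_diff_le by (intro AE_I2) simp
  qed
  have eqI: "integral\<^sup>N M (u a) = ennreal (\<integral>x. (s a x - g x)\<^sup>2 \<partial>M)" for a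
    unfolding u_def using iu by (intro nn_integral_eq_integral) auto
  have lim0: "((\<lambda>a. \<integral>x. (s a x - g x)\<^sup>2 \<partial>M) \<longlongrightarrow> 0) sequentially"
  proof -
    have fl: "filterlim (\<lambda>a. (nu a, nu a)) (sequentially \<times>\<^sub>F sequentially) sequentially"
      by (intro filterlim_Pair filterlim_subseq nu_smono)
    have "((\<lambda>a. (\<lambda>(m, n). \<integral>x. \<bar>rect_partial_sum c \<psi> m n x - g x\<bar>\<^sup>2 \<partial>M) (nu a, nu a)) \<longlongrightarrow> 0) sequentially"
      by (rule filterlim_compose[OF L2_sum fl])
    then show ?thesis unfolding s_def rps_Sm one_ioc by simp
  qed
  have "((\<lambda>a. integral\<^sup>N M (u a)) \<longlongrightarrow> ennreal 0) sequentially"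
    unfolding eqI by (intro tendsto_ennrealI lim0)
  then have li: "liminf (\<lambda>a. integral\<^sup>N M (u a)) = 0"
    by (intro lim_imp_Liminf) auto
  have "(\<integral>\<^sup>+x. liminf (\<lambda>a. u a x) \<partial>M) \<le> liminf (\<lambda>a. integral\<^sup>N M (u a))"
    by (rule nn_integral_liminf[OF mu])
  then have "(\<integral>\<^sup>+x. liminf (\<lambda>a. u a x) \<partial>M) = 0" using li by simp
  moreover have "(\<lambda>x. liminf (\<lambda>a. u a x)) \<in> borel_measurable M" using mu by measurable
  ultimately have ae: "AE x in M. liminf (\<lambda>a. u a x) = 0"
    using nn_integral_0_iff_AE by blast
  show ?thesis
  proof (rule AE_mp[OF ae], intro AE_I2 impI allI)
    fix x y assume l0: "liminf (\<lambda>a. u a x) = 0" and ly: "((\<lambda>a. Sm {0<..nu a} {0<..nu a} x) \<longlongrightarrow> y) sequentially"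
    have "((\<lambda>a. u a x) \<longlongrightarrow> ennreal ((y - g x)\<^sup>2)) sequentially"
      unfolding u_def s_def by (intro tendsto_ennrealI tendsto_intros ly)
    then have "liminf (\<lambda>a. u a x) = ennreal ((y - g x)\<^sup>2)" by (intro lim_imp_Liminf) auto
    then have "ennreal ((y - g x)\<^sup>2) = 0" using l0 by simp
    then have "(y - g x)\<^sup>2 = 0" by simp
    then show "y = g x" by simp
  qed
qed

lemma main:
  assumes coef: "(\<lambda>(j, k). (c j k)\<^sup>2 * (log 2 (log 2 (real j + 3)))\<^sup>2 * (log 2 (log 2 (real k + 3)))\<^sup>2)
                 summable_on ({1..} \<times> {1..})"
    and g_meas: "g \<in> borel_measurable M"
    and g_L2: "integrable M (\<lambda>x. (g x)\<^sup>2)"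
    and L2_sum: "((\<lambda>(m, n). \<integral>x. \<bar>rect_partial_sum c \<psi> m n x - g x\<bar>\<^sup>2 \<partial>M) \<longlongrightarrow> 0)
                   (sequentially \<times>\<^sub>F sequentially)"
  shows "AE x in M.
           ((\<lambda>(P, Q). (1 / (real P * real Q)) *
               (\<Sum>m=1..P. \<Sum>n=1..Q. \<bar>rect_partial_sum c \<psi> m n x - g x\<bar>\<^sup>2)) \<longlongrightarrow> 0)
           (sequentially \<times>\<^sub>F sequentially)"
proof (rule AE_mp[OF AE_conjI[OF AE_fin[OF coef] Gg[OF g_meas g_L2 L2_sum]]], intro AE_I2 impI)
  fix x
  assume H: "((\<Sum>i. \<Sum>l. ennreal (tau i l x)) \<noteq> top \<and> (\<Sum>l. \<Sum>i. ennreal (tau i l x)) \<noteq> top) \<and>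
      (\<forall>y. ((\<lambda>a. Sm {0<..nu a} {0<..nu a} x) \<longlongrightarrow> y) sequentially \<longrightarrow> y = g x)"
  note S = good_summ[of x]
  have S1: "\<And>i. summable (\<lambda>l. \<bar>FF i l x\<bar>)" and S2: "summable (\<lambda>i. \<Sum>l. \<bar>FF i l x\<bar>)"
    and SY1: "\<And>i. summable (\<lambda>l. (real l+1)^2 * MYv i l x)" and SY2: "summable (\<lambda>i. \<Sum>l. (real l+1)^2 * MYv i l x)"
    and SX1: "\<And>l. summable (\<lambda>i. (real i+1)^2 * MXv i l x)" and SX2: "summable (\<lambda>l. \<Sum>i. (real i+1)^2 * MXv i l x)"
    and SZ1: "\<And>l. summable (\<lambda>i. MZv i l x)" and SZ2: "summable (\<lambda>l. \<Sum>i. MZv i l x)"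
    using S H by auto
  define G where "G = (\<Sum>i. \<Sum>l. FF i l x)"
  have conv: "((\<lambda>a. Sm {0<..nu a} {0<..nu a} x) \<longlongrightarrow> G) sequentially"
  proof -
    have b: "\<bar>Sm {0<..nu a} {0<..nu a} x - G\<bar> \<le> (\<Sum>k. \<Sum>l. \<bar>FF (k + a) l x\<bar>) + (\<Sum>i. \<Sum>k. \<bar>FF i (k + a) x\<bar>)" for a
      unfolding Hsum G_def FF_def[symmetric] by (rule GB[where F="\<lambda>i l. FF i l x", OF S1 S2])
    have l: "((\<lambda>a. (\<Sum>k. \<Sum>l. \<bar>FF (k + a) l x\<bar>) + (\<Sum>i. \<Sum>k. \<bar>FF i (k + a) x\<bar>)) \<longlongrightarrow> 0 + 0) sequentially"
      by (intro tendsto_add tail_lim[OF S2] tail2_lim[where F="\<lambda>i l. FF i l x", OF S1 S2])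
    have "((\<lambda>a. Sm {0<..nu a} {0<..nu a} x - G) \<longlongrightarrow> 0) sequentially"
      by (rule Lim_null_comparison[OF _ l[simplified]]) (use b in \<open>auto intro: always_eventually\<close>)
    then show ?thesis by (rule LIM_zero_cancel)
  qed
  have Gg: "g x = G" using H conv by auto
  have "((\<lambda>(P, Q). (1 / (real P * real Q)) * (\<Sum>m=1..P. \<Sum>n=1..Q. \<bar>Sm {1..m} {1..n} x - g x\<bar>\<^sup>2)) \<longlongrightarrow> 0)
           (sequentially \<times>\<^sub>F sequentially)"
  proof (rule DM[where x=x and gx="g x" and MXv="\<lambda>i l. MXv i l x" and MYv="\<lambda>i l. MYv i l x" and MZv="\<lambda>i l. MZv i l x"])
    show "\<And>i. summable (\<lambda>l. \<bar>Sm {nu i<..nu (Suc i)} {nu l<..nu (Suc l)} x\<bar>)" using S1 unfolding FF_def .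
    show "summable (\<lambda>i. \<Sum>l. \<bar>Sm {nu i<..nu (Suc i)} {nu l<..nu (Suc l)} x\<bar>)" using S2 unfolding FF_def .
    show "g x = (\<Sum>i. \<Sum>l. Sm {nu i<..nu (Suc i)} {nu l<..nu (Suc l)} x)" using Gg unfolding G_def FF_def .
    show "\<And>i l Q. (\<Sum>n\<in>{nu l<..nu (Suc l)} \<inter> {..Q}. (Sm {nu i<..nu (Suc i)} {n<..nu (Suc l)} x)\<^sup>2)
               \<le> min (real Q) (real (nu (Suc l))) * MXv i l x" by (rule Xb)
    show "\<And>i l P. (\<Sum>m\<in>{nu i<..nu (Suc i)} \<inter> {..P}. (Sm {m<..nu (Suc i)} {nu l<..nu (Suc l)} x)\<^sup>2)
               \<le> min (real P) (real (nu (Suc i))) * MYv i l x" by (rule Yb)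
    show "\<And>i l P Q. (\<Sum>m\<in>{nu i<..nu (Suc i)} \<inter> {..P}. \<Sum>n\<in>{nu l<..nu (Suc l)} \<inter> {..Q}.
               (Sm {nu i<..nu (Suc i)} {nu l<..nu (Suc l)} x - Sm {nu i<..m} {nu l<..n} x)\<^sup>2)
               \<le> real P * min (real Q) (real (nu (Suc l))) * MZv i l x"
      using Zb unfolding FF_def .
  qed (use MXv0 MYv0 MZv0 SX1 SX2 SY1 SY2 SZ1 SZ2 in auto)
  then show "((\<lambda>(P, Q). (1 / (real P * real Q)) * (\<Sum>m=1..P. \<Sum>n=1..Q. \<bar>rect_partial_sum c \<psi> m n x - g x\<bar>\<^sup>2)) \<longlongrightarrow> 0)
           (sequentially \<times>\<^sub>F sequentially)" unfolding rps_Sm .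
qed

end

theorem theorem2:
  fixes M :: "'a measure"
    and \<psi> :: "nat \<Rightarrow> nat \<Rightarrow> 'a \<Rightarrow> real"
    and c :: "nat \<Rightarrow> nat \<Rightarrow> real"
    and g :: "'a \<Rightarrow> real"
  assumes fin: "finite_measure M"
    and ons: "orthonormal_system2 M \<psi>"
    and coef: "(\<lambda>(j, k). (c j k)\<^sup>2 * (log 2 (log 2 (real j + 3)))\<^sup>2 * (log 2 (log 2 (real k + 3)))\<^sup>2)
                 summable_on ({1..} \<times> {1..})"
    and g_meas: "g \<in> borel_measurable M"
    and g_L2: "integrable M (\<lambda>x. (g x)\<^sup>2)"
    and L2_sum: "((\<lambda>(m, n). \<integral>x. \<bar>rect_partial_sum c \<psi> m n x - g x\<bar>\<^sup>2 \<partial>M) \<longlongrightarrow> 0)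
                   (sequentially \<times>\<^sub>F sequentially)"
  shows "AE x in M.
           ((\<lambda>(P, Q). (1 / (real P * real Q)) *
               (\<Sum>m=1..P. \<Sum>n=1..Q. \<bar>rect_partial_sum c \<psi> m n x - g x\<bar>\<^sup>2)) \<longlongrightarrow> 0)
           (sequentially \<times>\<^sub>F sequentially)"
  using dbl.main[OF dbl.intro[OF fin ons] coef g_meas g_L2 L2_sum] .


end
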